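(* Let $G$ be a connected $m$-uniform hypergraph on $n$ vertices with matching number $\mu(G)$, having more than one edge. Then $s(G)\le m^{n-\mu(G)-2}$ and $\gamma(G)\le(n-\mu(G)-2)\mathrm{cl}(m)$.
   Context: A matching is a set of pairwise disjoint edges; $\mu(G)$ is the maximum size of a matching. Adjacency tensor $\mathcal{A}(G)$ (vertices $v_1,\dots,v_n$): $a_{i_1\cdots i_m}=\frac1{(m-1)!}$ if $\{v_{i_1},\dots,v_{i_m}\}$ is an edge, else $0$. For a tensor $\mathcal{A}$: eigenvectors $\mathcal{A}x^{m-1}=\lambda x^{[m-1]}$, $x\ne0$, $(\mathcal{A}x^{m-1})_i=\sum a_{ii_2\cdots i_m}x_{i_2}\cdots x_{i_m}$; $\rho(\mathcal{A})$ spectral radius. Stabilizing index $s(\mathcal{A})$: number of invertible diagonal $D$ with $d_{11}=1$ and $\mathcal{A}=D^{-(m-1)}\mathcal{A}D$, $(D^{-(m-1)}\mathcal{A}D)_{i_1\cdots i_m}=d_{i_1}^{-(m-1)}a_{i_1\cdots i_m}d_{i_2}\cdots d_{i_m}$. Stabilizing dimension $\gamma(\mathcal{A})$: composition length of the $\mathbb{Z}_m$-module of eigenvectors $y$ for $\rho(\mathcal{A})$ normalized by $y_1=1$, with operation $y\circ\hat y=D_yD_{\hat y}v_p$, $D_y=\mathrm{diag}(y_i/|y_i|)$, $v_p$ the positive one. $s(G)=s(\mathcal{A}(G))$, $\gamma(G)=\gamma(\mathcal{A}(G))$. $\mathrm{cl}(m)$: number of prime factors of $m$ with multiplicity. *)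

theory Defs
  imports Complex_Main "HOL-Computational_Algebra.Primes" "HOL-Library.FuncSet"
begin

text \<open>A hypergraph is a set E of edges, each a subset of the vertex set {..<n}.
  Vertex v_1 of the paper is vertex 0 here.\<close>

definition hg_uniform :: "nat \<Rightarrow> nat \<Rightarrow> nat set set \<Rightarrow> bool" where
  "hg_uniform n m E \<longleftrightarrow> (\<forall>e\<in>E. e \<subseteq> {..<n} \<and> card e = m)"

definition hg_adj :: "nat set set \<Rightarrow> nat \<Rightarrow> nat \<Rightarrow> bool" where
  "hg_adj E x y \<longleftrightarrow> (\<exists>e\<in>E. x \<in> e \<and> y \<in> e)"

definition hg_connected :: "nat \<Rightarrow> nat set set \<Rightarrow> bool" where
  "hg_connected n E \<longleftrightarrow> (\<forall>x<n. \<forall>y<n. (hg_adj E)\<^sup>*\<^sup>* x y)"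

definition matching_number :: "nat set set \<Rightarrow> nat" where
  "matching_number E = Max {card M | M. M \<subseteq> E \<and> pairwise disjnt M}"

text \<open>A tensor is a function on index lists; only lists of length m with entries
  in {..<n} are relevant.\<close>

type_synonym tensor = "nat list \<Rightarrow> complex"

definition index_lists :: "nat \<Rightarrow> nat \<Rightarrow> nat list set" where
  "index_lists k n = {js. length js = k \<and> set js \<subseteq> {..<n}}"

definition adj_tensor :: "nat \<Rightarrow> nat set set \<Rightarrow> tensor" where
  "adj_tensor m E = (\<lambda>is. if set is \<in> E then 1 / of_nat (fact (m - 1)) else 0)"

definition tensor_apply :: "nat \<Rightarrow> nat \<Rightarrow> tensor \<Rightarrow> (nat \<Rightarrow> complex) \<Rightarrow> nat \<Rightarrow> complex" where
  "tensor_apply m n A x i = (\<Sum>js\<in>index_lists (m - 1) n. A (i # js) * prod_list (map x js))"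

definition eigenpair :: "nat \<Rightarrow> nat \<Rightarrow> tensor \<Rightarrow> complex \<Rightarrow> (nat \<Rightarrow> complex) \<Rightarrow> bool" where
  "eigenpair m n A lam x \<longleftrightarrow> (\<exists>i<n. x i \<noteq> 0) \<and>
     (\<forall>i<n. tensor_apply m n A x i = lam * x i ^ (m - 1))"

definition tensor_spectral_radius :: "nat \<Rightarrow> nat \<Rightarrow> tensor \<Rightarrow> real" where
  "tensor_spectral_radius m n A = Sup {cmod lam | lam. \<exists>x. eigenpair m n A lam x}"

text \<open>Invertible diagonal matrices D are represented by their diagonals d on {..<n}.
  The condition A = D^{-(m-1)} A D, entrywise.\<close>
definition stabilizing_index :: "nat \<Rightarrow> nat \<Rightarrow> tensor \<Rightarrow> nat" where
  "stabilizing_index m n A = card {d \<in> extensional {..<n}. d 0 = 1 \<and> (\<forall>i<n. d i \<noteq> 0) \<and>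
     (\<forall>i<n. \<forall>js\<in>index_lists (m - 1) n.
        A (i # js) = inverse (d i ^ (m - 1)) * A (i # js) * prod_list (map d js))}"

definition rho_eigvecs :: "nat \<Rightarrow> nat \<Rightarrow> tensor \<Rightarrow> (nat \<Rightarrow> complex) set" where
  "rho_eigvecs m n A = {y \<in> extensional {..<n}.
      eigenpair m n A (complex_of_real (tensor_spectral_radius m n A)) y \<and> y 0 = 1}"

definition perron_vec :: "nat \<Rightarrow> nat \<Rightarrow> tensor \<Rightarrow> nat \<Rightarrow> complex" where
  "perron_vec m n A = (THE v. v \<in> rho_eigvecs m n A \<and> (\<forall>i<n. Im (v i) = 0 \<and> Re (v i) > 0))"

text \<open>y o y' = D_y D_y' v_p, where D_y = diag(y_i/|y_i|) = diag(sgn y_i).\<close>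
definition eig_op :: "nat \<Rightarrow> nat \<Rightarrow> tensor \<Rightarrow> (nat \<Rightarrow> complex) \<Rightarrow> (nat \<Rightarrow> complex) \<Rightarrow> nat \<Rightarrow> complex" where
  "eig_op m n A y y' = restrict (\<lambda>i. sgn (y i) * sgn (y' i) * perron_vec m n A i) {..<n}"

text \<open>Submodules of a Z_m-module given by carrier Y, addition op and zero e;
  the scalar k acts as k-fold addition.\<close>
definition zm_submodule :: "nat \<Rightarrow> 'a set \<Rightarrow> ('a \<Rightarrow> 'a \<Rightarrow> 'a) \<Rightarrow> 'a \<Rightarrow> 'a set \<Rightarrow> bool" where
  "zm_submodule m Y op e S \<longleftrightarrow> S \<subseteq> Y \<and> e \<in> S \<and> (\<forall>x\<in>S. \<forall>y\<in>S. op x y \<in> S) \<and>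
     (\<forall>x\<in>S. \<forall>k<m. (op x ^^ k) e \<in> S)"

definition zm_composition_series :: "nat \<Rightarrow> 'a set \<Rightarrow> ('a \<Rightarrow> 'a \<Rightarrow> 'a) \<Rightarrow> 'a \<Rightarrow> (nat \<Rightarrow> 'a set) \<Rightarrow> nat \<Rightarrow> bool" where
  "zm_composition_series m Y op e S k \<longleftrightarrow> S 0 = {e} \<and> S k = Y \<and>
     (\<forall>i\<le>k. zm_submodule m Y op e (S i)) \<and>
     (\<forall>i<k. S i \<subset> S (Suc i) \<and>
        \<not> (\<exists>T. zm_submodule m Y op e T \<and> S i \<subset> T \<and> T \<subset> S (Suc i)))"

text \<open>Composition length (well defined by Jordan-Hoelder).\<close>
definition zm_composition_length :: "nat \<Rightarrow> 'a set \<Rightarrow> ('a \<Rightarrow> 'a \<Rightarrow> 'a) \<Rightarrow> 'a \<Rightarrow> nat" where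
  "zm_composition_length m Y op e = (LEAST k. \<exists>S. zm_composition_series m Y op e S k)"

definition stabilizing_dimension :: "nat \<Rightarrow> nat \<Rightarrow> tensor \<Rightarrow> nat" where
  "stabilizing_dimension m n A =
     zm_composition_length m (rho_eigvecs m n A) (eig_op m n A) (perron_vec m n A)"

definition cl :: "nat \<Rightarrow> nat" where
  "cl m = size (prime_factorization m)"

end

theory Submission
  imports Defs "HOL-Analysis.Analysis" "HOL-Algebra.Coset" "HOL-Combinatorics.Multiset_Permutations"
begin


definition Sv :: "nat set set \<Rightarrow> nat \<Rightarrow> (nat \<Rightarrow> 'a::comm_ring_1) \<Rightarrow> 'a" where
  "Sv E i x = (\<Sum>e\<in>{e\<in>E. i\<in>e}. \<Prod>j\<in>e-{i}. x j)"

lemma finite_index_lists: "finite (index_lists k n)"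
proof -
  have "index_lists k n = {xs. set xs \<subseteq> {..<n} \<and> length xs = k}"
    unfolding index_lists_def by auto
  thus ?thesis using finite_lists_length_eq[of "{..<n}" k] by simp
qed

lemma hgE: assumes "hg_uniform n m E" "e \<in> E" shows "e \<subseteq> {..<n}" "card e = m" "finite e"
  using assms unfolding hg_uniform_def by (auto intro: finite_subset)

lemma TA:
  assumes H: "hg_uniform n m E" and i: "i < n"
  shows "tensor_apply m n (adj_tensor m E) x i = Sv E i x"
proof -
  define c :: complex where "c = 1 / of_nat (fact (m - 1))"
  define L where "L = {js \<in> index_lists (m - 1) n. set (i#js) \<in> E}"
  define Ei where "Ei = {e\<in>E. i\<in>e}"
  have finE: "finite E"
  proof -
    have "E \<subseteq> Pow {..<n}" using H unfolding hg_uniform_def by auto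
    thus ?thesis by (rule finite_subset) simp
  qed
  have "tensor_apply m n (adj_tensor m E) x i =
        (\<Sum>js\<in>index_lists (m - 1) n. if set (i#js) \<in> E then c * prod_list (map x js) else 0)"
    unfolding tensor_apply_def adj_tensor_def c_def by (intro sum.cong) auto
  also have "\<dots> = (\<Sum>js\<in>L. c * prod_list (map x js))"
    unfolding L_def by (subst sum.inter_filter[OF finite_index_lists]) simp
  also have L: "L = (\<Union>e\<in>Ei. permutations_of_set (e-{i}))"
  proof (intro equalityI subsetI)
    fix js assume "js \<in> L"
    hence js: "length js = m - 1" "set js \<subseteq> {..<n}" "set (i#js) \<in> E"
      unfolding L_def index_lists_def by auto
    have cm: "card (set (i#js)) = m" using hgE(2)[OF H js(3)] .
    have m1: "m \<ge> 1" using cm by (cases "m = 0") auto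
    have "length (i#js) = m" using js m1 by simp
    hence "card (set (i#js)) = length (i#js)" using cm by simp
    hence dist: "distinct (i#js)" by (rule card_distinct)
    show "js \<in> (\<Union>e\<in>Ei. permutations_of_set (e-{i}))"
      using dist js unfolding Ei_def permutations_of_set_def by (intro UN_I[of "set (i#js)"]) auto
  next
    fix js assume "js \<in> (\<Union>e\<in>Ei. permutations_of_set (e-{i}))"
    then obtain e where e: "e \<in> E" "i \<in> e" and js: "set js = e - {i}" "distinct js"
      unfolding Ei_def permutations_of_set_def by auto
    have "length js = card (e - {i})" using js distinct_card by metis
    also have "\<dots> = m - 1" using hgE[OF H e(1)] e(2) by simp
    finally have "length js = m - 1" .
    moreover have "set (i#js) = e" using js e by auto
    ultimately show "js \<in> L" unfolding L_def index_lists_def using hgE(1)[OF H e(1)] e js by auto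
  qed
  also have "(\<Sum>js\<in>(\<Union>e\<in>Ei. permutations_of_set (e-{i})). c * prod_list (map x js))
      = (\<Sum>e\<in>Ei. \<Sum>js\<in>permutations_of_set (e-{i}). c * prod_list (map x js))"
  proof (rule sum.UNION_disjoint)
    show "finite Ei" unfolding Ei_def using finE by simp
    show "\<forall>e\<in>Ei. finite (permutations_of_set (e - {i}))" by simp
    show "\<forall>e\<in>Ei. \<forall>e'\<in>Ei. e \<noteq> e' \<longrightarrow> permutations_of_set (e - {i}) \<inter> permutations_of_set (e' - {i}) = {}"
      unfolding Ei_def permutations_of_set_def by auto
  qed
  also have "\<dots> = (\<Sum>e\<in>Ei. \<Prod>j\<in>e-{i}. x j)"
  proof (rule sum.cong[OF refl])
    fix e assume e: "e \<in> Ei"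
    have fe: "finite e" "card e = m" using hgE[OF H] e unfolding Ei_def by auto
    have "(\<Sum>js\<in>permutations_of_set (e-{i}). c * prod_list (map x js))
        = (\<Sum>js\<in>permutations_of_set (e-{i}). c * (\<Prod>j\<in>e-{i}. x j))"
      by (intro sum.cong refl) (auto simp: permutations_of_set_def prod.distinct_set_conv_list[symmetric])
    also have "\<dots> = of_nat (fact (card (e - {i}))) * c * (\<Prod>j\<in>e-{i}. x j)"
      using fe by simp
    also have "card (e - {i}) = m - 1" using fe e unfolding Ei_def by simp
    also have "of_nat (fact (m - 1)) * c = 1" unfolding c_def by simp
    finally show "(\<Sum>js\<in>permutations_of_set (e-{i}). c * prod_list (map x js)) = (\<Prod>j\<in>e-{i}. x j)"
      by simp
  qed
  finally show ?thesis unfolding Sv_def Ei_def .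
qed

definition stab :: "nat set set \<Rightarrow> nat \<Rightarrow> (nat \<Rightarrow> complex) \<Rightarrow> bool" where
  "stab E m d \<longleftrightarrow> (\<forall>e\<in>E. \<forall>i\<in>e. d i ^ (m - 1) = (\<Prod>j\<in>e-{i}. d j))"

definition Dset :: "nat \<Rightarrow> nat \<Rightarrow> nat set set \<Rightarrow> (nat \<Rightarrow> complex) set" where
  "Dset n m E = {d \<in> extensional {..<n}. d 0 = 1 \<and> (\<forall>i<n. d i \<noteq> 0) \<and> stab E m d}"

lemma edge_list:
  assumes H: "hg_uniform n m E" and js: "js \<in> index_lists (m - 1) n" and E: "set (i#js) \<in> E"
  shows "distinct (i#js)" "set js = set (i#js) - {i}"
proof -
  have cm: "card (set (i#js)) = m" using hgE(2)[OF H E] .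
  have m1: "m \<ge> 1" using cm by (cases "m = 0") auto
  have "length (i#js) = m" using js m1 unfolding index_lists_def by simp
  hence "card (set (i#js)) = length (i#js)" using cm by simp
  thus dist: "distinct (i#js)" by (rule card_distinct)
  thus "set js = set (i#js) - {i}" by auto
qed

lemma SI:
  assumes H: "hg_uniform n m E"
  shows "stabilizing_index m n (adj_tensor m E) = card (Dset n m E)"
proof -
  have "\<And>d. (\<forall>i<n. d i \<noteq> 0) \<Longrightarrow>
     (\<forall>i<n. \<forall>js\<in>index_lists (m - 1) n.
        adj_tensor m E (i # js) = inverse (d i ^ (m - 1)) * adj_tensor m E (i # js) * prod_list (map d js))
     \<longleftrightarrow> stab E m d"
  proof
    fix d :: "nat \<Rightarrow> complex" assume nz: "\<forall>i<n. d i \<noteq> 0"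
    {
      assume A: "\<forall>i<n. \<forall>js\<in>index_lists (m - 1) n.
        adj_tensor m E (i # js) = inverse (d i ^ (m - 1)) * adj_tensor m E (i # js) * prod_list (map d js)"
      show "stab E m d" unfolding stab_def
      proof (intro ballI)
        fix e i assume e: "e \<in> E" and i: "i \<in> e"
        have fe: "finite e" "e \<subseteq> {..<n}" "card e = m" using hgE[OF H e] by auto
        obtain js where js: "set js = e - {i}" "distinct js" using finite_distinct_list[of "e - {i}"] fe by auto
        have lj: "length js = m - 1" using js fe i distinct_card[of js] by simp
        have jsI: "js \<in> index_lists (m - 1) n" unfolding index_lists_def using lj js fe by auto
        have se: "set (i#js) = e" using js i by auto
        have "i < n" using fe i by auto
        from A[rule_format, OF this jsI] se e
        have "1 / of_nat (fact (m - 1)) = inverse (d i ^ (m - 1)) * (1 / of_nat (fact (m - 1))) * prod_list (map d js)"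
          unfolding adj_tensor_def by simp
        hence "1 = inverse (d i ^ (m - 1)) * prod_list (map d js)"
          by (simp add: field_simps)
        hence "d i ^ (m - 1) = prod_list (map d js)"
          using nz \<open>i < n\<close> by (simp add: field_simps)
        also have "\<dots> = prod d (set js)" by (rule prod.distinct_set_conv_list[OF js(2), symmetric])
        also have "\<dots> = prod d (e - {i})" using js(1) by (rule arg_cong)
        finally show "d i ^ (m - 1) = (\<Prod>j\<in>e-{i}. d j)" .
      qed
    }
    {
      assume S: "stab E m d"
      show "\<forall>i<n. \<forall>js\<in>index_lists (m - 1) n.
        adj_tensor m E (i # js) = inverse (d i ^ (m - 1)) * adj_tensor m E (i # js) * prod_list (map d js)"
      proof (intro allI impI ballI)
        fix i js assume i: "i < n" and js: "js \<in> index_lists (m - 1) n"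
        show "adj_tensor m E (i # js) = inverse (d i ^ (m - 1)) * adj_tensor m E (i # js) * prod_list (map d js)"
        proof (cases "set (i#js) \<in> E")
          case False thus ?thesis unfolding adj_tensor_def by simp
        next
          case True
          note el = edge_list[OF H js True]
          have "prod_list (map d js) = prod d (set js)"
            using el(1) by (simp add: prod.distinct_set_conv_list)
          also have "\<dots> = prod d (set (i#js)-{i})" by (rule arg_cong[OF el(2)])
          also have "\<dots> = d i ^ (m - 1)" using S True unfolding stab_def by auto
          finally have "inverse (d i ^ (m - 1)) * prod_list (map d js) = 1"
            using nz i by simp
          thus ?thesis by (simp add: mult.assoc mult.commute mult.left_commute)
        qed
      qed
    }
  qed
  hence "{d \<in> extensional {..<n}. d 0 = 1 \<and> (\<forall>i<n. d i \<noteq> 0) \<and>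
     (\<forall>i<n. \<forall>js\<in>index_lists (m - 1) n.
        adj_tensor m E (i # js) = inverse (d i ^ (m - 1)) * adj_tensor m E (i # js) * prod_list (map d js))}
     = Dset n m E" unfolding Dset_def by blast
  thus ?thesis unfolding stabilizing_index_def by simp
qed

lemma adj_propagate:
  assumes "(hg_adj E)\<^sup>*\<^sup>* a b" "P a" "\<And>e x y. e \<in> E \<Longrightarrow> x \<in> e \<Longrightarrow> y \<in> e \<Longrightarrow> P x \<Longrightarrow> P y"
  shows "P b"
  using assms(1,2)
proof (induction rule: rtranclp_induct)
  case base thus ?case .
next
  case (step y z)
  then obtain e where "e \<in> E" "y \<in> e" "z \<in> e" unfolding hg_adj_def by auto
  with step assms(3) show ?case by blast
qed

locale hgc =
  fixes n m :: nat and E :: "nat set set"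
  assumes H: "hg_uniform n m E" and C: "hg_connected n E" and E1: "card E > 1"
begin

lemma finE: "finite E"
proof -
  have "E \<subseteq> Pow {..<n}" using H unfolding hg_uniform_def by auto
  thus ?thesis by (rule finite_subset) simp
qed

lemma edge: assumes "e \<in> E" shows "e \<subseteq> {..<n}" "card e = m" "finite e"
  using hgE[OF H assms] by auto

lemma two_edges: obtains e e' where "e \<in> E" "e' \<in> E" "e \<noteq> e'"
proof -
  have "\<not> (\<forall>e\<in>E. \<forall>e'\<in>E. e = e')"
  proof
    assume "\<forall>e\<in>E. \<forall>e'\<in>E. e = e'"
    hence "card E \<le> Suc 0" by (simp add: card_le_Suc0_iff_eq[OF finE])
    thus False using E1 by simp
  qed
  thus ?thesis using that by blast
qed

lemma conn: "a < n \<Longrightarrow> b < n \<Longrightarrow> (hg_adj E)\<^sup>*\<^sup>* a b"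
  using C unfolding hg_connected_def by auto

lemma m2: "m \<ge> 2"
proof (rule ccontr)
  assume "\<not> m \<ge> 2"
  hence m: "m = 0 \<or> m = 1" by auto
  obtain e e' where e: "e \<in> E" "e' \<in> E" "e \<noteq> e'" by (rule two_edges)
  show False
  proof (cases "m = 0")
    case True
    hence "e = {}" "e' = {}" using edge[OF e(1)] edge[OF e(2)] by auto
    thus False using e by simp
  next
    case False
    hence m1: "m = 1" using m by simp
    have "card e = 1" "card e' = 1" using edge(2)[OF e(1)] edge(2)[OF e(2)] m1 by auto
    then obtain a b where a: "e = {a}" and b: "e' = {b}" by (meson card_1_singletonE)
    have "a < n" "b < n" using edge(1)[OF e(1)] edge(1)[OF e(2)] a b by auto
    hence "(hg_adj E)\<^sup>*\<^sup>* a b" by (rule conn)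
    hence "b = a"
    proof (rule adj_propagate[where P = "\<lambda>x. x = a"])
      fix f x y assume "f \<in> E" "x \<in> f" "y \<in> f" "x = a"
      moreover have "card f = 1" using edge(2) \<open>f \<in> E\<close> m1 by simp
      then obtain c where "f = {c}" by (rule card_1_singletonE)
      ultimately show "y = a" by simp
    qed simp
    thus False using a b e by simp
  qed
qed

lemma n_pos: "0 < n"
proof -
  obtain e e' where e: "e \<in> E" "e' \<in> E" "e \<noteq> e'" by (rule two_edges)
  have "e \<noteq> {}" using edge(2)[OF e(1)] m2 by auto
  then obtain x where "x \<in> e" by auto
  thus ?thesis using edge(1)[OF e(1)] by auto
qed

lemma D_pow: assumes d: "d \<in> Dset n m E" and e: "e \<in> E" and i: "i \<in> e"
  shows "d i ^ m = (\<Prod>j\<in>e. d j)"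
proof -
  have "d i ^ m = d i * d i ^ (m - 1)" using m2 by (cases m) auto
  also have "d i ^ (m - 1) = (\<Prod>j\<in>e-{i}. d j)" using d e i unfolding Dset_def stab_def by auto
  also have "d i * \<dots> = (\<Prod>j\<in>e. d j)" using prod.remove[OF edge(3)[OF e] i, of d] by simp
  finally show ?thesis .
qed

lemma D_root: assumes d: "d \<in> Dset n m E" and i: "i < n" shows "d i ^ m = 1"
proof -
  have "(hg_adj E)\<^sup>*\<^sup>* 0 i" using conn[OF n_pos i] .
  thus ?thesis
  proof (rule adj_propagate[where P = "\<lambda>x. d x ^ m = 1"])
    show "d 0 ^ m = 1" using d unfolding Dset_def by simp
    fix f x y assume "f \<in> E" "x \<in> f" "y \<in> f" "d x ^ m = 1"
    thus "d y ^ m = 1" using D_pow[OF d] by metis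
  qed
qed

lemma D_norm: assumes d: "d \<in> Dset n m E" and i: "i < n" shows "cmod (d i) = 1"
proof -
  have "cmod (d i) ^ m = 1" using D_root[OF d i] by (metis norm_one norm_power)
  hence "cmod (d i) ^ m = 1 ^ m" by simp
  thus ?thesis using m2 power_eq_imp_eq_base[of "cmod (d i)" m 1] by simp
qed

lemma D_edge_prod: assumes d: "d \<in> Dset n m E" and e: "e \<in> E" shows "(\<Prod>j\<in>e. d j) = 1"
proof -
  have "e \<noteq> {}" using edge(2)[OF e] m2 by auto
  then obtain i where i: "i \<in> e" by auto
  have "i < n" using edge(1)[OF e] i by auto
  thus ?thesis using D_pow[OF d e i] D_root[OF d] by simp
qed

lemma D_det: assumes d: "d \<in> Dset n m E" and d': "d' \<in> Dset n m E" and e: "e \<in> E" and x: "x \<in> e"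
  and agree: "\<forall>j\<in>e-{x}. d j = d' j" shows "d x = d' x"
proof -
  have "d x * (\<Prod>j\<in>e-{x}. d j) = 1" using D_edge_prod[OF d e] prod.remove[OF edge(3)[OF e] x, of d] by simp
  moreover have "d' x * (\<Prod>j\<in>e-{x}. d' j) = 1" using D_edge_prod[OF d' e] prod.remove[OF edge(3)[OF e] x, of d'] by simp
  moreover have "(\<Prod>j\<in>e-{x}. d j) = (\<Prod>j\<in>e-{x}. d' j)" using agree by (intro prod.cong) auto
  ultimately show ?thesis by (metis mult_cancel_right mult_zero_right zero_neq_one)
qed

lemma matching: obtains M where "M \<subseteq> E" "pairwise disjnt M" "card M = matching_number E"
proof -
  let ?S = "{card M | M. M \<subseteq> E \<and> pairwise disjnt M}"
  have "?S \<subseteq> {..card E}" using card_mono[OF finE] by auto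
  hence fin: "finite ?S" by (rule finite_subset) simp
  have "card {} \<in> ?S" by (intro CollectI exI[of _ "{}"]) auto
  hence "?S \<noteq> {}" by blast
  from Max_in[OF fin this] that show ?thesis unfolding matching_number_def by auto
qed

lemma not_all_matching: assumes M: "M \<subseteq> E" "pairwise disjnt M" shows "\<exists>f\<in>E. f \<notin> M"
proof (rule ccontr)
  assume "\<not> ?thesis"
  hence EM: "E \<subseteq> M" by auto
  obtain e e' where e: "e \<in> E" "e' \<in> E" "e \<noteq> e'" by (rule two_edges)
  have "e \<noteq> {}" "e' \<noteq> {}" using edge(2)[OF e(1)] edge(2)[OF e(2)] m2 by auto
  then obtain a b where ab: "a \<in> e" "b \<in> e'" by auto
  have "a < n" "b < n" using ab edge(1)[OF e(1)] edge(1)[OF e(2)] by auto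
  hence "(hg_adj E)\<^sup>*\<^sup>* a b" by (rule conn)
  hence "b \<in> e"
  proof (rule adj_propagate[where P = "\<lambda>x. x \<in> e"])
    fix f x y assume f: "f \<in> E" "x \<in> f" "y \<in> f" "x \<in> e"
    have "f = e"
    proof (rule ccontr)
      assume "f \<noteq> e"
      hence "disjnt f e" using M(2) EM f(1) e(1) unfolding pairwise_def by auto
      thus False using f by (auto simp: disjnt_def)
    qed
    thus "y \<in> e" using f by simp
  qed (rule ab(1))
  moreover have "disjnt e e'" using M(2) EM e unfolding pairwise_def by auto
  ultimately show False using ab by (auto simp: disjnt_def)
qed

lemma pivot_agree:
  assumes M: "M \<subseteq> E" "pairwise disjnt M" and p: "\<forall>e\<in>M. p e \<in> e"
    and d: "d \<in> Dset n m E" and d': "d' \<in> Dset n m E"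
    and hyp: "\<forall>i<n. i \<notin> insert q (p ` M) \<longrightarrow> d i = d' i"
    and e: "e \<in> M" and q: "q \<notin> e"
  shows "d (p e) = d' (p e)"
proof (rule D_det[OF d d'])
  show eE: "e \<in> E" using e M by auto
  show "p e \<in> e" using p e by auto
  show "\<forall>j\<in>e - {p e}. d j = d' j"
  proof
    fix j assume j: "j \<in> e - {p e}"
    have "j < n" using j edge(1)[OF eE] by auto
    moreover have "j \<notin> p ` M"
    proof
      assume "j \<in> p ` M"
      then obtain e' where e': "e' \<in> M" "j = p e'" by auto
      hence "j \<in> e'" using p by auto
      show False
      proof (cases "e' = e")
        case True thus False using e' j by simp
      next
        case False
        hence "disjnt e' e" using M(2) e e' unfolding pairwise_def by auto
        thus False using \<open>j \<in> e'\<close> j by (auto simp: disjnt_def)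
      qed
    qed
    ultimately show "d j = d' j" using hyp j q by auto
  qed
qed

lemma pivots: "\<exists>W \<subseteq> {..<n}. card W = n - matching_number E - 2 \<and>
   (\<forall>d\<in>Dset n m E. \<forall>d'\<in>Dset n m E. (\<forall>i\<in>W. d i = d' i) \<longrightarrow> d = d')"
proof -
  obtain M where M: "M \<subseteq> E" "pairwise disjnt M" "card M = matching_number E" by (rule matching)
  have finM: "finite M" using M(1) finE by (rule finite_subset)
  have disj: "\<And>e e' x. e \<in> M \<Longrightarrow> e' \<in> M \<Longrightarrow> x \<in> e \<Longrightarrow> x \<in> e' \<Longrightarrow> e = e'"
    using M(2) unfolding pairwise_def disjnt_def by blast
  have "\<forall>e\<in>M. \<exists>x. x \<in> e \<and> x \<noteq> 0"
  proof
    fix e assume "e \<in> M"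
    hence "card e = m" "finite e" using edge M(1) by auto
    hence "card (e - {0}) \<ge> 1" using m2 card_Diff1_le[of e 0] by (cases "0 \<in> e") auto
    hence "e - {0} \<noteq> {}" by (metis card.empty not_one_le_zero)
    thus "\<exists>x. x \<in> e \<and> x \<noteq> 0" by auto
  qed
  then obtain p where p: "\<forall>e\<in>M. p e \<in> e \<and> p e \<noteq> 0" by metis
  define U where "U = \<Union>M"
  have key: "\<exists>p' q. (\<forall>e\<in>M. p' e \<in> e \<and> p' e \<noteq> 0) \<and> q < n \<and> q \<noteq> 0 \<and> q \<notin> p' ` M \<and>
     (\<forall>d\<in>Dset n m E. \<forall>d'\<in>Dset n m E. (\<forall>i<n. i \<notin> insert q (p' ` M) \<longrightarrow> d i = d' i) \<longrightarrow> (\<forall>i<n. d i = d' i))"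
  proof (cases "\<exists>f\<in>E. \<exists>q\<in>f. q \<notin> U \<and> q \<noteq> 0")
    case True
    then obtain f q where f: "f \<in> E" "q \<in> f" "q \<notin> U" "q \<noteq> 0" by auto
    have qn: "q < n" using edge(1)[OF f(1)] f(2) by auto
    have qM: "q \<notin> p ` M" using p f(3) unfolding U_def by auto
    show ?thesis
    proof (rule exI[of _ p], rule exI[of _ q], intro conjI)
      show "\<forall>e\<in>M. p e \<in> e \<and> p e \<noteq> 0" by (rule p)
      show "q < n" "q \<noteq> 0" "q \<notin> p ` M" using qn f qM by auto
      show "\<forall>d\<in>Dset n m E. \<forall>d'\<in>Dset n m E. (\<forall>i<n. i \<notin> insert q (p ` M) \<longrightarrow> d i = d' i) \<longrightarrow> (\<forall>i<n. d i = d' i)"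
      proof (intro ballI impI allI)
      fix d d' assume d: "d \<in> Dset n m E" and d': "d' \<in> Dset n m E"
        and hyp: "\<forall>i<n. i \<notin> insert q (p ` M) \<longrightarrow> d i = d' i"
      have s1: "\<forall>e\<in>M. d (p e) = d' (p e)"
        using pivot_agree[OF M(1,2) _ d d' hyp] p f(3) unfolding U_def by auto
      have s2: "d q = d' q"
      proof (rule D_det[OF d d' f(1,2)])
        show "\<forall>j\<in>f - {q}. d j = d' j"
          using s1 hyp edge(1)[OF f(1)] by auto
      qed
      fix i assume "i < n"
      thus "d i = d' i" using s1 s2 hyp by auto
    qed
    qed
  next
    case False
    hence nA: "\<And>f q. f \<in> E \<Longrightarrow> q \<in> f \<Longrightarrow> q \<noteq> 0 \<Longrightarrow> q \<in> U" by auto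
    have "\<exists>f e1 q p1. f \<in> E \<and> e1 \<in> M \<and> q \<in> f \<and> q \<in> e1 \<and> q \<noteq> 0 \<and> p1 \<in> e1 \<and> p1 \<notin> f \<and> p1 \<noteq> 0"
    proof (cases "0 \<in> U")
      case False
      obtain e e' where e: "e \<in> E" "e' \<in> E" "e \<noteq> e'" by (rule two_edges)
      have "card e = m" "finite e" using edge[OF e(1)] by auto
      hence "card (e - {0}) \<ge> 1" using m2 card_Diff1_le[of e 0] by (cases "0 \<in> e") auto
      hence "e - {0} \<noteq> {}" by (metis card.empty not_one_le_zero)
      then obtain y where y: "y \<in> e" "y \<noteq> 0" by blast
      have "y < n" using y edge(1)[OF e(1)] by auto
      have "(hg_adj E)\<^sup>*\<^sup>* 0 y" using conn[OF n_pos \<open>y < n\<close>] .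
      then obtain z where "hg_adj E 0 z" using y(2) by (cases rule: converse_rtranclpE) auto
      then obtain g where g: "g \<in> E" "0 \<in> g" unfolding hg_adj_def by auto
      have "card g = m" "finite g" using edge[OF g(1)] by auto
      hence "card (g - {0}) \<ge> 1" using m2 g(2) by auto
      hence "g - {0} \<noteq> {}" by (metis card.empty not_one_le_zero)
      then obtain q where q: "q \<in> g" "q \<noteq> 0" by blast
      hence "q \<in> U" using nA g(1) by auto
      then obtain e1 where e1: "e1 \<in> M" "q \<in> e1" unfolding U_def by auto
      have "\<not> e1 \<subseteq> g"
      proof
        assume "e1 \<subseteq> g"
        moreover have "card e1 = card g" using edge(2) e1(1) M(1) g(1) by auto
        ultimately have "e1 = g" using card_subset_eq[OF \<open>finite g\<close>] by auto
        thus False using g(2) e1(1) False unfolding U_def by auto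
      qed
      then obtain p1 where p1: "p1 \<in> e1" "p1 \<notin> g" by auto
      have "p1 \<noteq> 0" using p1 e1 False unfolding U_def by auto
      show ?thesis using g q e1 p1 \<open>p1 \<noteq> 0\<close> by blast
    next
      case True
      then obtain e0 where e0: "e0 \<in> M" "0 \<in> e0" unfolding U_def by auto
      obtain f where f: "f \<in> E" "f \<notin> M" using not_all_matching[OF M(1,2)] by auto
      have fin0: "finite e0" using edge(3) e0 M(1) by auto
      have "\<not> f \<subseteq> e0"
      proof
        assume "f \<subseteq> e0"
        moreover have "card f = card e0" using edge(2) e0(1) M(1) f(1) by auto
        ultimately have "f = e0" using card_subset_eq[OF fin0] by auto
        thus False using f e0 by auto
      qed
      then obtain q where q: "q \<in> f" "q \<notin> e0" by auto
      have "q \<noteq> 0" using q e0 by (metis)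
      hence "q \<in> U" using nA f(1) q(1) by auto
      then obtain e1 where e1: "e1 \<in> M" "q \<in> e1" unfolding U_def by auto
      have "e1 \<noteq> e0" using e1 q by auto
      hence "0 \<notin> e1" using disj[OF e1(1) e0(1)] e0 by auto
      have finf: "finite f" using edge(3) f(1) by auto
      have "\<not> e1 \<subseteq> f"
      proof
        assume "e1 \<subseteq> f"
        moreover have "card e1 = card f" using edge(2) e1(1) M(1) f(1) by auto
        ultimately have "e1 = f" using card_subset_eq[OF finf] by auto
        thus False using f e1 by auto
      qed
      then obtain p1 where p1: "p1 \<in> e1" "p1 \<notin> f" by auto
      have "p1 \<noteq> 0" using p1 \<open>0 \<notin> e1\<close> by metis
      show ?thesis using f q e1 p1 \<open>p1 \<noteq> 0\<close> \<open>q \<noteq> 0\<close> by blast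
    qed
    then obtain f e1 q p1 where B: "f \<in> E" "e1 \<in> M" "q \<in> f" "q \<in> e1" "q \<noteq> 0" "p1 \<in> e1" "p1 \<notin> f" "p1 \<noteq> 0"
      by blast
    define p' where "p' = p(e1 := p1)"
    have p': "\<forall>e\<in>M. p' e \<in> e \<and> p' e \<noteq> 0" using p B unfolding p'_def by auto
    have qn: "q < n" using edge(1)[OF B(1)] B(3) by auto
    have qM: "q \<notin> p' ` M"
    proof
      assume "q \<in> p' ` M"
      then obtain e where e: "e \<in> M" "q = p' e" by auto
      show False
      proof (cases "e = e1")
        case True thus False using e B unfolding p'_def by auto
      next
        case False
        have "q \<in> e" using e p' by auto
        thus False using disj[OF e(1) B(2) _ B(4)] False by auto
      qed
    qed
    show ?thesis
    proof (rule exI[of _ p'], rule exI[of _ q], intro conjI)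
      show "\<forall>e\<in>M. p' e \<in> e \<and> p' e \<noteq> 0" by (rule p')
      show "q < n" "q \<noteq> 0" "q \<notin> p' ` M" using qn B qM by auto
      show "\<forall>d\<in>Dset n m E. \<forall>d'\<in>Dset n m E. (\<forall>i<n. i \<notin> insert q (p' ` M) \<longrightarrow> d i = d' i) \<longrightarrow> (\<forall>i<n. d i = d' i)"
      proof (intro ballI impI allI)
      fix d d' assume d: "d \<in> Dset n m E" and d': "d' \<in> Dset n m E"
        and hyp: "\<forall>i<n. i \<notin> insert q (p' ` M) \<longrightarrow> d i = d' i"
      have s1: "\<forall>e\<in>M - {e1}. d (p' e) = d' (p' e)"
      proof
        fix e assume e: "e \<in> M - {e1}"
        have "q \<notin> e" using disj[OF _ B(2) _ B(4), of e] e by auto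
        thus "d (p' e) = d' (p' e)"
          using pivot_agree[OF M(1,2) _ d d' hyp, of e] p' e by auto
      qed
      have s2: "d q = d' q"
      proof (rule D_det[OF d d' B(1,3)])
        show "\<forall>j\<in>f - {q}. d j = d' j"
        proof
          fix j assume j: "j \<in> f - {q}"
          have "j < n" using j edge(1)[OF B(1)] by auto
          show "d j = d' j"
          proof (cases "j \<in> p' ` M")
            case True
            then obtain e where e: "e \<in> M" "j = p' e" by auto
            have "e \<noteq> e1" using e j B(7) unfolding p'_def by auto
            thus ?thesis using s1 e by auto
          next
            case False thus ?thesis using hyp j \<open>j < n\<close> by auto
          qed
        qed
      qed
      have s3: "d p1 = d' p1"
      proof (rule D_det[OF d d' _ B(6)])
        show "e1 \<in> E" using B(2) M(1) by auto
        show "\<forall>j\<in>e1 - {p1}. d j = d' j"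
        proof
          fix j assume j: "j \<in> e1 - {p1}"
          have "j < n" using j edge(1)[of e1] B(2) M(1) by auto
          show "d j = d' j"
          proof (cases "j \<in> insert q (p' ` M)")
            case True
            show ?thesis
            proof (cases "j = q")
              case True thus ?thesis using s2 by simp
            next
              case False
              then obtain e where e: "e \<in> M" "j = p' e" using \<open>j \<in> insert q (p' ` M)\<close> by auto
              show ?thesis
              proof (cases "e = e1")
                case True thus ?thesis using e j unfolding p'_def by auto
              next
                case False
                have "j \<in> e" using e p' by auto
                thus ?thesis using disj[OF e(1) B(2) _] j False by auto
              qed
            qed
          next
            case False thus ?thesis using hyp j \<open>j < n\<close> by auto
          qed
        qed
      qed
      fix i assume i: "i < n"
      show "d i = d' i"
      proof (cases "i \<in> insert q (p' ` M)")
        case True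
        then consider "i = q" | e where "e \<in> M" "i = p' e" by auto
        thus ?thesis
        proof cases
          case 1 thus ?thesis using s2 by simp
        next
          case 2 thus ?thesis using s1 s3 unfolding p'_def by (cases "e = e1") auto
        qed
      next
        case False thus ?thesis using hyp i by auto
      qed
    qed
    qed
  qed
  then obtain p' q where P: "\<forall>e\<in>M. p' e \<in> e \<and> p' e \<noteq> 0" "q < n" "q \<noteq> 0" "q \<notin> p' ` M"
    and agr: "\<forall>d\<in>Dset n m E. \<forall>d'\<in>Dset n m E. (\<forall>i<n. i \<notin> insert q (p' ` M) \<longrightarrow> d i = d' i) \<longrightarrow> (\<forall>i<n. d i = d' i)"
    by blast
  have inj: "inj_on p' M"
  proof (rule inj_onI)
    fix e e' assume "e \<in> M" "e' \<in> M" "p' e = p' e'"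
    thus "e = e'" using disj[of e e' "p' e"] P(1) by metis
  qed
  define Q where "Q = insert 0 (insert q (p' ` M))"
  have Qsub: "Q \<subseteq> {..<n}"
    unfolding Q_def using n_pos P(2) P(1) edge(1) M(1) by fastforce
  have cardQ: "card Q = matching_number E + 2"
  proof -
    have "card (p' ` M) = card M" using card_image[OF inj] .
    moreover have "0 \<notin> insert q (p' ` M)" using P by auto
    ultimately show ?thesis unfolding Q_def using P(4) finM M(3) by simp
  qed
  define W where "W = {..<n} - Q"
  show ?thesis
  proof (intro exI[of _ W] conjI ballI impI)
    show "W \<subseteq> {..<n}" unfolding W_def by auto
    show "card W = n - matching_number E - 2"
      unfolding W_def using card_Diff_subset[OF _ Qsub] cardQ finite_subset[OF Qsub] by simp
    fix d d' assume d: "d \<in> Dset n m E" and d': "d' \<in> Dset n m E" and aw: "\<forall>i\<in>W. d i = d' i"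
    have "\<forall>i<n. i \<notin> insert q (p' ` M) \<longrightarrow> d i = d' i"
    proof (intro allI impI)
      fix i assume "i < n" "i \<notin> insert q (p' ` M)"
      thus "d i = d' i" using aw d d' unfolding W_def Q_def Dset_def by (cases "i = 0") auto
    qed
    hence "\<forall>i<n. d i = d' i" using agr d d' by blast
    moreover have "d \<in> extensional {..<n}" "d' \<in> extensional {..<n}" using d d' unfolding Dset_def by auto
    ultimately show "d = d'" by (intro extensionalityI) auto
  qed
qed

end


definition pmul :: "nat set \<Rightarrow> (nat \<Rightarrow> complex) \<Rightarrow> (nat \<Rightarrow> complex) \<Rightarrow> nat \<Rightarrow> complex" where
  "pmul I a b = restrict (\<lambda>i. a i * b i) I"
definition one1 :: "nat set \<Rightarrow> nat \<Rightarrow> complex" where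
  "one1 I = restrict (\<lambda>i. 1) I"
definition pw :: "nat set \<Rightarrow> nat \<Rightarrow> (nat \<Rightarrow> complex) \<Rightarrow> nat \<Rightarrow> complex" where
  "pw I k a = restrict (\<lambda>i. a i ^ k) I"
definition goodset :: "nat \<Rightarrow> nat set \<Rightarrow> (nat \<Rightarrow> complex) set \<Rightarrow> bool" where
  "goodset m I C \<longleftrightarrow> C \<subseteq> extensional I \<and> (\<forall>x\<in>C. \<forall>i\<in>I. x i ^ m = 1) \<and> one1 I \<in> C \<and>
     (\<forall>a\<in>C. \<forall>b\<in>C. pmul I a b \<in> C)"
definition grp :: "nat set \<Rightarrow> (nat \<Rightarrow> complex) set \<Rightarrow> (nat \<Rightarrow> complex) monoid" where
  "grp I C = \<lparr>carrier = C, mult = pmul I, one = one1 I\<rparr>"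

lemma pw_in: assumes "goodset m I C" "a \<in> C" shows "pw I k a \<in> C"
proof (induction k)
  case 0
  have "pw I 0 a = one1 I" unfolding pw_def one1_def by simp
  thus ?case using assms unfolding goodset_def by simp
next
  case (Suc k)
  have "pw I (Suc k) a = pmul I a (pw I k a)" unfolding pw_def pmul_def by auto
  thus ?case using Suc assms unfolding goodset_def by auto
qed

lemma pw_inv: assumes "goodset m I C" "a \<in> C" "m \<ge> 1" shows "pmul I (pw I (m - 1) a) a = one1 I"
proof -
  have "\<And>i. i \<in> I \<Longrightarrow> a i ^ (m - 1) * a i = 1"
  proof -
    fix i assume "i \<in> I"
    hence "a i ^ m = 1" using assms unfolding goodset_def by auto
    moreover have "a i ^ (m - 1) * a i = a i ^ m" using assms(3)
      by (metis power_minus_mult zero_less_one order_less_le_trans)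
    ultimately show "a i ^ (m - 1) * a i = 1" by simp
  qed
  thus ?thesis unfolding pmul_def pw_def one1_def by (auto simp: fun_eq_iff)
qed

lemma good_group: assumes g: "goodset m I C" and m: "m \<ge> 1" shows "group (grp I C)"
proof (rule groupI)
  have ext: "\<And>x. x \<in> C \<Longrightarrow> x \<in> extensional I" using g unfolding goodset_def by auto
  show "\<And>x y. x \<in> carrier (grp I C) \<Longrightarrow> y \<in> carrier (grp I C) \<Longrightarrow> x \<otimes>\<^bsub>grp I C\<^esub> y \<in> carrier (grp I C)"
    using g unfolding goodset_def grp_def by auto
  show "\<one>\<^bsub>grp I C\<^esub> \<in> carrier (grp I C)" using g unfolding goodset_def grp_def by auto
  show "\<And>x y z. x \<in> carrier (grp I C) \<Longrightarrow> y \<in> carrier (grp I C) \<Longrightarrow> z \<in> carrier (grp I C) \<Longrightarrow>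
     x \<otimes>\<^bsub>grp I C\<^esub> y \<otimes>\<^bsub>grp I C\<^esub> z = x \<otimes>\<^bsub>grp I C\<^esub> (y \<otimes>\<^bsub>grp I C\<^esub> z)"
    unfolding grp_def pmul_def by (auto simp: fun_eq_iff mult.assoc)
  show "\<And>x. x \<in> carrier (grp I C) \<Longrightarrow> \<one>\<^bsub>grp I C\<^esub> \<otimes>\<^bsub>grp I C\<^esub> x = x"
    unfolding grp_def pmul_def one1_def using ext by (force simp: fun_eq_iff extensional_def)
  show "\<And>x. x \<in> carrier (grp I C) \<Longrightarrow> \<exists>y\<in>carrier (grp I C). y \<otimes>\<^bsub>grp I C\<^esub> x = \<one>\<^bsub>grp I C\<^esub>"
    using pw_in[OF g] pw_inv[OF g _ m] unfolding grp_def by auto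
qed

lemma good_dvd:
  assumes gH: "goodset m I H" and gC: "goodset m I C" and sub: "H \<subseteq> C" and fin: "finite C" and m: "m \<ge> 1"
  shows "card H dvd card C"
proof -
  interpret G: group "grp I C" by (rule good_group[OF gC m])
  have "subgroup H (grp I C)"
  proof (rule G.subgroupI)
    show "H \<subseteq> carrier (grp I C)" using sub unfolding grp_def by simp
    show "H \<noteq> {}" using gH unfolding goodset_def by auto
    show "\<And>a b. a \<in> H \<Longrightarrow> b \<in> H \<Longrightarrow> a \<otimes>\<^bsub>grp I C\<^esub> b \<in> H"
      using gH unfolding goodset_def grp_def by auto
    fix a assume a: "a \<in> H"
    have "inv\<^bsub>grp I C\<^esub> a = pw I (m - 1) a"
    proof (rule G.inv_equality)
      show "pw I (m - 1) a \<otimes>\<^bsub>grp I C\<^esub> a = \<one>\<^bsub>grp I C\<^esub>" using pw_inv[OF gH a m] unfolding grp_def by simp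
      show "a \<in> carrier (grp I C)" using a sub unfolding grp_def by auto
      show "pw I (m - 1) a \<in> carrier (grp I C)" using pw_in[OF gH a] sub unfolding grp_def by auto
    qed
    thus "inv\<^bsub>grp I C\<^esub> a \<in> H" using pw_in[OF gH a] by simp
  qed
  from G.lagrange_finite[OF _ this] fin have "card (rcosets\<^bsub>grp I C\<^esub> H) * card H = card C"
    unfolding order_def grp_def by simp
  thus ?thesis by (metis dvd_triv_right)
qed

lemma omega_dvd: assumes "(a::nat) dvd b" "b \<noteq> 0" shows "size (prime_factorization a) \<le> size (prime_factorization b)"
proof -
  have "a \<noteq> 0" using assms by auto
  hence "prime_factorization a \<subseteq># prime_factorization b"
    using assms prime_factorization_subset_iff_dvd by blast
  thus ?thesis by (rule size_mset_mono)
qed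

lemma omega_lt: assumes "(a::nat) dvd b" "a < b" "a \<noteq> 0"
  shows "size (prime_factorization a) < size (prime_factorization b)"
proof -
  obtain c where c: "b = a * c" using assms(1) by auto
  have "c \<noteq> 0" using c assms by auto
  have "c \<noteq> 1" using c assms by auto
  hence "prime_factorization c \<noteq> {#}" using \<open>c \<noteq> 0\<close> by (simp add: prime_factorization_empty_iff)
  hence "size (prime_factorization c) > 0" by (simp add: nonempty_has_size)
  moreover have "prime_factorization b = prime_factorization a + prime_factorization c"
    using c assms(3) \<open>c \<noteq> 0\<close> by (simp add: prime_factorization_mult)
  ultimately show ?thesis by simp
qed

lemma omega_pow: assumes "(m::nat) \<noteq> 0" shows "size (prime_factorization (m ^ k)) = k * size (prime_factorization m)"
proof (induction k)
  case 0 thus ?case by simp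
next
  case (Suc k)
  have "prime_factorization (m ^ Suc k) = prime_factorization m + prime_factorization (m ^ k)"
    using assms by (simp add: prime_factorization_mult)
  thus ?case using Suc by simp
qed

definition chainP :: "nat \<Rightarrow> 'a set \<Rightarrow> ('a \<Rightarrow> 'a \<Rightarrow> 'a) \<Rightarrow> 'a \<Rightarrow> nat \<Rightarrow> (nat \<Rightarrow> 'a set) \<Rightarrow> bool" where
  "chainP m Y op e k S \<longleftrightarrow> S 0 = {e} \<and> S k = Y \<and> (\<forall>i\<le>k. zm_submodule m Y op e (S i)) \<and> (\<forall>i<k. S i \<subset> S (Suc i))"

lemma comp_len_bound:
  fixes Y :: "'a set" and psi :: "'a \<Rightarrow> nat \<Rightarrow> complex"
  assumes eY: "e \<in> Y" and cl: "\<forall>x\<in>Y. \<forall>y\<in>Y. op x y \<in> Y" and ee: "op e e = e"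
    and inj: "inj_on psi Y" and pe: "psi e = one1 I"
    and hom: "\<forall>x\<in>Y. \<forall>y\<in>Y. psi (op x y) = pmul I (psi x) (psi y)"
    and gY: "goodset m I (psi ` Y)" and fin: "finite Y" and m: "m \<ge> 1"
  shows "zm_composition_length m Y op e \<le> size (prime_factorization (card Y))"
proof -
  let ?B = "size (prime_factorization (card Y))"
  have good: "goodset m I (psi ` S)" if S: "zm_submodule m Y op e S" for S
  proof -
    have SY: "S \<subseteq> Y" "e \<in> S" "\<forall>x\<in>S. \<forall>y\<in>S. op x y \<in> S" using S unfolding zm_submodule_def by auto
    show ?thesis unfolding goodset_def
    proof (intro conjI)
      show "psi ` S \<subseteq> extensional I" using gY image_mono[OF SY(1), of psi] unfolding goodset_def by (meson subset_trans)
      show "\<forall>x\<in>psi ` S. \<forall>i\<in>I. x i ^ m = 1" using gY SY unfolding goodset_def by blast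
      show "one1 I \<in> psi ` S" using pe SY by force
      show "\<forall>a\<in>psi ` S. \<forall>b\<in>psi ` S. pmul I a b \<in> psi ` S"
      proof (intro ballI)
        fix a b assume "a \<in> psi ` S" "b \<in> psi ` S"
        then obtain x y where "x \<in> S" "y \<in> S" "a = psi x" "b = psi y" by auto
        thus "pmul I a b \<in> psi ` S" using hom SY by (metis imageI subsetD)
      qed
    qed
  qed
  have bound: "k \<le> ?B" if ch: "chainP m Y op e k S" for k S
  proof -
    have sub: "\<And>i. i \<le> k \<Longrightarrow> zm_submodule m Y op e (S i)" using ch unfolding chainP_def by auto
    have SY: "\<And>i. i \<le> k \<Longrightarrow> S i \<subseteq> Y" using sub unfolding zm_submodule_def by auto
    have cardeq: "\<And>i. i \<le> k \<Longrightarrow> card (psi ` S i) = card (S i)"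
      using SY inj by (metis card_image inj_on_subset)
    have "j \<le> size (prime_factorization (card (S j)))" if "j \<le> k" for j
      using that
    proof (induction j)
      case 0 thus ?case by simp
    next
      case (Suc j)
      have j: "j < k" "j \<le> k" using Suc by auto
      have strict: "S j \<subset> S (Suc j)" using ch j unfolding chainP_def by auto
      have finS: "finite (S (Suc j))" using SY[OF Suc.prems] fin by (rule finite_subset)
      have "card (psi ` S j) dvd card (psi ` S (Suc j))"
      proof (rule good_dvd[OF good good _ _ m])
        show "zm_submodule m Y op e (S j)" using sub j by auto
        show "zm_submodule m Y op e (S (Suc j))" using sub Suc.prems by auto
        show "psi ` S j \<subseteq> psi ` S (Suc j)" using strict by auto
        show "finite (psi ` S (Suc j))" using finS by simp
      qed
      hence dv: "card (S j) dvd card (S (Suc j))" using cardeq j Suc.prems by simp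
      have lt: "card (S j) < card (S (Suc j))" using psubset_card_mono[OF finS strict] .
      have "e \<in> S j" using sub[OF j(2)] unfolding zm_submodule_def by auto
      hence "card (S j) \<noteq> 0" using finS strict by (metis card_0_eq empty_iff finite_subset psubset_imp_subset)
      from omega_lt[OF dv lt this] Suc.IH[OF j(2)] show ?case by simp
    qed
    from this[of k] ch show ?thesis unfolding chainP_def by simp
  qed
  have subY: "zm_submodule m Y op e Y"
  proof -
    have "(op x ^^ k) e \<in> Y" if "x \<in> Y" for x k by (induction k) (use that eY cl in auto)
    thus ?thesis unfolding zm_submodule_def using eY cl by auto
  qed
  have sube: "zm_submodule m Y op e {e}"
  proof -
    have "(op e ^^ k) e = e" for k by (induction k) (use ee in auto)
    thus ?thesis unfolding zm_submodule_def using eY ee by auto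
  qed
  have ex: "\<exists>k S. chainP m Y op e k S"
  proof (cases "Y = {e}")
    case True
    thus ?thesis using sube unfolding chainP_def by (intro exI[of _ 0] exI[of _ "\<lambda>_. {e}"]) auto
  next
    case False
    hence "{e} \<subset> Y" using eY by auto
    thus ?thesis using sube subY unfolding chainP_def
      by (intro exI[of _ 1] exI[of _ "\<lambda>i. if i = 0 then {e} else Y"]) auto
  qed
  define k0 where "k0 = (GREATEST k. \<exists>S. chainP m Y op e k S)"
  have bd: "\<And>y. (\<exists>S. chainP m Y op e y S) \<Longrightarrow> y \<le> ?B" using bound by blast
  obtain k1 S1 where k1: "chainP m Y op e k1 S1" using ex by blast
  have "\<exists>S. chainP m Y op e k0 S" unfolding k0_def
    by (rule GreatestI_nat[of _ k1 ?B]) (use k1 bd in auto)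
  then obtain S where S: "chainP m Y op e k0 S" by auto
  have k0B: "k0 \<le> ?B" using bound[OF S] .
  have k0max: "\<And>k S. chainP m Y op e k S \<Longrightarrow> k \<le> k0" unfolding k0_def
    by (rule Greatest_le_nat[of _ _ ?B]) (use bd in auto)
  have "zm_composition_series m Y op e S k0"
    unfolding zm_composition_series_def
  proof (intro conjI allI impI)
    show "S 0 = {e}" "S k0 = Y" using S unfolding chainP_def by auto
    show "\<And>i. i \<le> k0 \<Longrightarrow> zm_submodule m Y op e (S i)" using S unfolding chainP_def by auto
    show "\<And>i. i < k0 \<Longrightarrow> S i \<subset> S (Suc i)" using S unfolding chainP_def by auto
    fix i assume i: "i < k0"
    show "\<not> (\<exists>T. zm_submodule m Y op e T \<and> S i \<subset> T \<and> T \<subset> S (Suc i))"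
    proof
      assume "\<exists>T. zm_submodule m Y op e T \<and> S i \<subset> T \<and> T \<subset> S (Suc i)"
      then obtain T where T: "zm_submodule m Y op e T" "S i \<subset> T" "T \<subset> S (Suc i)" by auto
      define S' where "S' = (\<lambda>j. if j \<le> i then S j else if j = Suc i then T else S (j - 1))"
      have "chainP m Y op e (Suc k0) S'"
        unfolding chainP_def
      proof (intro conjI allI impI)
        show "S' 0 = {e}" using S unfolding S'_def chainP_def by auto
        show "S' (Suc k0) = Y" using S i unfolding S'_def chainP_def by auto
        fix j
        show "j \<le> Suc k0 \<Longrightarrow> zm_submodule m Y op e (S' j)"
          using S T(1) i unfolding S'_def chainP_def by auto
        assume j: "j < Suc k0"
        show "S' j \<subset> S' (Suc j)"
        proof -
          consider "j < i" | "j = i" | "j = Suc i" | "j > Suc i" by linarith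
          thus ?thesis
          proof cases
            case 1 thus ?thesis using S i unfolding S'_def chainP_def by auto
          next
            case 2 thus ?thesis using T unfolding S'_def by auto
          next
            case 3 thus ?thesis using T unfolding S'_def by auto
          next
            case 4
            hence jj: "j - 1 < k0" "Suc (j - 1) = j" using j by auto
            have "S (j - 1) \<subset> S (Suc (j - 1))" using S jj(1) unfolding chainP_def by blast
            hence "S (j - 1) \<subset> S j" using jj(2) by simp
            thus ?thesis using 4 unfolding S'_def by auto
          qed
        qed
      qed
      from k0max[OF this] show False by simp
    qed
  qed
  hence "zm_composition_length m Y op e \<le> k0"
    unfolding zm_composition_length_def by (intro Least_le) auto
  thus ?thesis using k0B by simp
qed


definition Ff :: "nat set set \<Rightarrow> (nat \<Rightarrow> real) \<Rightarrow> real" where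
  "Ff E x = (\<Sum>e\<in>E. \<Prod>j\<in>e. x j)"
definition Nf :: "nat \<Rightarrow> nat \<Rightarrow> (nat \<Rightarrow> real) \<Rightarrow> real" where
  "Nf n m x = (\<Sum>i<n. x i ^ m)"

context hgc begin

lemma max_exists: "\<exists>xs. xs \<in> extensional {..<n} \<and> (\<forall>i<n. 0 \<le> xs i \<and> xs i \<le> 1) \<and> Nf n m xs = 1 \<and>
  (\<forall>y. y \<in> extensional {..<n} \<and> (\<forall>i<n. 0 \<le> y i \<and> y i \<le> 1) \<and> Nf n m y = 1 \<longrightarrow> Ff E y \<le> Ff E xs)"
proof -
  define X where "X = product_topology (\<lambda>_. euclideanreal) {..<n}"
  define K0 where "K0 = PiE {..<n} (\<lambda>_. {0..1::real})"
  have top: "topspace X = extensional {..<n}" unfolding X_def topspace_product_topology by (simp add: PiE_def)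
  have cK0: "compactin X K0" unfolding X_def K0_def by (simp add: compactin_PiE)
  have proj: "\<And>j. j < n \<Longrightarrow> continuous_map X euclideanreal (\<lambda>x. x j)"
    unfolding X_def by (rule continuous_map_product_projection) simp
  have cN: "continuous_map X euclideanreal (Nf n m)"
    unfolding Nf_def by (intro continuous_map_sum continuous_map_real_pow proj) auto
  have cF: "continuous_map X euclideanreal (Ff E)"
    unfolding Ff_def
  proof (intro continuous_map_sum continuous_map_prod finE)
    fix e j assume "e \<in> E" "j \<in> e"
    hence "j < n" using edge(1) by auto
    thus "continuous_map X euclideanreal (\<lambda>x. x j)" by (rule proj)
  qed (use edge in auto)
  define K where "K = {x \<in> topspace X. Nf n m x \<in> {1}} \<inter> K0"
  have cK: "compactin X K" unfolding K_def
    by (intro closed_Int_compactin cK0 closedin_continuous_map_preimage[OF cN]) auto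
  have "compactin euclideanreal (Ff E ` K)" by (rule image_compactin[OF cK cF])
  hence cFK: "compact (Ff E ` K)" by simp
  define z where "z = restrict (\<lambda>i. if i = 0 then 1 else 0::real) {..<n}"
  have "Nf n m z = (\<Sum>i<n. if i = 0 then 1 else 0)"
    unfolding Nf_def z_def using m2 by (intro sum.cong) auto
  also have "\<dots> = 1" using n_pos by (simp add: sum.delta)
  finally have "z \<in> K" unfolding K_def K0_def top z_def by auto
  hence "Ff E ` K \<noteq> {}" by auto
  from compact_attains_sup[OF cFK this] obtain xs where xs: "xs \<in> K" "\<forall>y\<in>K. Ff E y \<le> Ff E xs" by auto
  have memK: "y \<in> K \<longleftrightarrow> y \<in> extensional {..<n} \<and> (\<forall>i<n. 0 \<le> y i \<and> y i \<le> 1) \<and> Nf n m y = 1" for y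
    unfolding K_def K0_def top by (auto simp: PiE_def Pi_def)
  show ?thesis using xs memK by blast
qed

lemma F_scale: "Ff E (restrict (\<lambda>i. c * y i) {..<n}) = c ^ m * Ff E y"
proof -
  have "\<And>e. e \<in> E \<Longrightarrow> (\<Prod>j\<in>e. restrict (\<lambda>i. c * y i) {..<n} j) = c ^ m * (\<Prod>j\<in>e. y j)"
  proof -
    fix e assume e: "e \<in> E"
    have "(\<Prod>j\<in>e. restrict (\<lambda>i. c * y i) {..<n} j) = (\<Prod>j\<in>e. c * y j)"
      using edge(1)[OF e] by (intro prod.cong) auto
    also have "\<dots> = c ^ card e * (\<Prod>j\<in>e. y j)" by (simp add: prod.distrib)
    finally show "(\<Prod>j\<in>e. restrict (\<lambda>i. c * y i) {..<n} j) = c ^ m * (\<Prod>j\<in>e. y j)"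
      using edge(2)[OF e] by simp
  qed
  thus ?thesis unfolding Ff_def by (simp add: sum_distrib_left)
qed

lemma N_scale: "Nf n m (restrict (\<lambda>i. c * y i) {..<n}) = c ^ m * Nf n m y"
  unfolding Nf_def by (simp add: sum_distrib_left power_mult_distrib)

lemma ratio:
  assumes xs: "\<forall>y. y \<in> extensional {..<n} \<and> (\<forall>i<n. 0 \<le> y i \<and> y i \<le> 1) \<and> Nf n m y = 1 \<longrightarrow> Ff E y \<le> Ff E xs"
    and y: "y \<in> extensional {..<n}" "\<forall>i<n. 0 \<le> y i"
  shows "Ff E y \<le> Ff E xs * Nf n m y"
proof (cases "Nf n m y = 0")
  case True
  have "\<forall>i\<in>{..<n}. y i ^ m = 0" using True y(2) unfolding Nf_def
    by (subst sum_nonneg_eq_0_iff[symmetric]) auto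
  hence y0: "\<And>i. i < n \<Longrightarrow> y i = 0" using m2 by auto
  have "Ff E y = 0" unfolding Ff_def
  proof (intro sum.neutral ballI)
    fix e assume e: "e \<in> E"
    have "e \<noteq> {}" using edge(2)[OF e] m2 by auto
    then obtain j where "j \<in> e" by auto
    hence "y j = 0" using y0 edge(1)[OF e] by auto
    thus "(\<Prod>j\<in>e. y j) = 0" using \<open>j \<in> e\<close> edge(3)[OF e] by (metis prod_zero_iff)
  qed
  thus ?thesis using True by simp
next
  case False
  have Nnn: "Nf n m y \<ge> 0" unfolding Nf_def using y(2) by (intro sum_nonneg) auto
  hence Npos: "Nf n m y > 0" using False by simp
  define c where "c = root m (Nf n m y)"
  have cm: "c ^ m = Nf n m y" unfolding c_def using m2 Nnn by (intro real_root_pow_pos2) auto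
  have cpos: "c > 0" unfolding c_def using Npos m2 by simp
  define w where "w = restrict (\<lambda>i. (1/c) * y i) {..<n}"
  have Nw: "Nf n m w = 1" unfolding w_def N_scale using cm cpos Npos by (simp add: power_divide)
  have "\<forall>i<n. 0 \<le> w i \<and> w i \<le> 1"
  proof (intro allI impI conjI)
    fix i assume i: "i < n"
    show w0: "0 \<le> w i" unfolding w_def using i y(2) cpos by simp
    have "w i ^ m \<le> Nf n m w" unfolding Nf_def
      using member_le_sum[of i "{..<n}" "\<lambda>i. w i ^ m"] i w0 y(2) cpos
      by (simp add: w_def)
    hence "w i ^ m \<le> 1" using Nw by simp
    thus "w i \<le> 1" using w0 m2 power_le_one_iff[OF w0, of m] by simp
  qed
  hence "Ff E w \<le> Ff E xs" using xs Nw unfolding w_def by auto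
  hence "(1/c) ^ m * Ff E y \<le> Ff E xs" unfolding w_def F_scale by simp
  hence "Ff E y / Nf n m y \<le> Ff E xs" using cm by (simp add: power_divide)
  thus ?thesis using Npos by (simp add: divide_le_eq mult.commute)
qed

lemma max_pos:
  assumes xs: "\<forall>y. y \<in> extensional {..<n} \<and> (\<forall>i<n. 0 \<le> y i \<and> y i \<le> 1) \<and> Nf n m y = 1 \<longrightarrow> Ff E y \<le> Ff E xs"
    and xe: "xs \<in> extensional {..<n}" and x0: "\<forall>i<n. 0 \<le> xs i" and xN: "Nf n m xs = 1"
  shows "Ff E xs > 0" "\<forall>i<n. xs i > 0"
proof -
  define one where "one = restrict (\<lambda>i. 1::real) {..<n}"
  have "Ff E one = real (card E)" unfolding Ff_def one_def
  proof -
    have "(\<Sum>e\<in>E. \<Prod>j\<in>e. restrict (\<lambda>i. 1::real) {..<n} j) = (\<Sum>e\<in>E. 1)"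
      using edge(1) by (intro sum.cong refl prod.neutral) auto
    thus "(\<Sum>e\<in>E. \<Prod>j\<in>e. restrict (\<lambda>i. 1::real) {..<n} j) = real (card E)" by simp
  qed
  moreover have "Ff E one \<le> Ff E xs * Nf n m one" by (rule ratio[OF xs]) (auto simp: one_def)
  moreover have "Nf n m one = real n" unfolding Nf_def one_def by simp
  ultimately have "real (card E) \<le> Ff E xs * real n" by simp
  moreover have "real (card E) > 0" using E1 by simp
  moreover have "real n > 0" using n_pos by simp
  ultimately show Fpos: "Ff E xs > 0"
  proof -
    assume a1: "real (card E) \<le> Ff E xs * real n" and a2: "real (card E) > 0" and a3: "real n > 0"
    show "Ff E xs > 0"
    proof (rule ccontr)
      assume "\<not> Ff E xs > 0"
      hence "Ff E xs * real n \<le> 0" using a3 by (simp add: mult_nonpos_nonneg)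
      thus False using a1 a2 by linarith
    qed
  qed
  have clos: "xs v > 0" if e: "e \<in> E" and u: "u \<in> e" and v: "v \<in> e" and pu: "xs u > 0" for e u v
  proof (rule ccontr)
    assume "\<not> xs v > 0"
    hence v0: "xs v = 0" using x0 edge(1)[OF e] v by force
    have fe: "finite e" using edge(3)[OF e] .
    define T where "T = {j\<in>e. xs j = 0}"
    define k where "k = card T"
    have Te: "T \<subseteq> e" unfolding T_def by auto
    have finT: "finite T" using fe Te by (rule finite_subset[rotated])
    have "v \<in> T" unfolding T_def using v v0 by simp
    hence k1: "k \<ge> 1" unfolding k_def using finT card_gt_0_iff[of T] by fastforce
    have "T \<subset> e" using u pu Te unfolding T_def by (metis (mono_tags, lifting) less_irrefl mem_Collect_eq psubsetI)
    hence km: "k < m" unfolding k_def using psubset_card_mono[OF fe] edge(2)[OF e] by simp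
    define c where "c = (\<Prod>j\<in>e-T. xs j)"
    have cpos: "c > 0" unfolding c_def
    proof (rule prod_pos)
      fix j assume "j \<in> e - T"
      hence "j < n" "xs j \<noteq> 0" using edge(1)[OF e] unfolding T_def by auto
      thus "xs j > 0" using x0 by force
    qed
    define \<epsilon> where "\<epsilon> = min 1 (c / (2 * real k * Ff E xs))"
    have epos: "\<epsilon> > 0" unfolding \<epsilon>_def using cpos Fpos k1 by simp
    have e1: "\<epsilon> \<le> 1" unfolding \<epsilon>_def by simp
    have e2: "\<epsilon> \<le> c / (2 * real k * Ff E xs)" unfolding \<epsilon>_def by simp
    define y where "y = restrict (\<lambda>j. if j \<in> T then \<epsilon> else xs j) {..<n}"
    have ye: "y \<in> extensional {..<n}" unfolding y_def by simp
    have yx: "\<And>j. j < n \<Longrightarrow> xs j \<le> y j" unfolding y_def T_def using epos by auto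
    have y0: "\<forall>j<n. 0 \<le> y j" using yx x0 by (meson order_trans)
    have Tn: "T \<subseteq> {..<n}" using Te edge(1)[OF e] by auto
    have prod_e: "(\<Prod>j\<in>e. y j) = \<epsilon> ^ k * c"
    proof -
      have "(\<Prod>j\<in>e. y j) = (\<Prod>j\<in>T. y j) * (\<Prod>j\<in>e-T. y j)"
        using prod.subset_diff[OF Te fe, of y] by (simp add: mult.commute)
      also have "(\<Prod>j\<in>T. y j) = (\<Prod>j\<in>T. \<epsilon>)" using Tn unfolding y_def by (intro prod.cong) auto
      also have "(\<Prod>j\<in>e-T. y j) = c" unfolding c_def y_def using edge(1)[OF e] by (intro prod.cong) auto
      finally show ?thesis unfolding k_def by simp
    qed
    have prod_x: "(\<Prod>j\<in>e. xs j) = 0" using v v0 fe by (metis prod_zero_iff)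
    have "Ff E y = (\<Prod>j\<in>e. y j) + (\<Sum>e'\<in>E-{e}. \<Prod>j\<in>e'. y j)"
      unfolding Ff_def using sum.remove[OF finE e] by simp
    moreover have "(\<Sum>e'\<in>E-{e}. \<Prod>j\<in>e'. xs j) \<le> (\<Sum>e'\<in>E-{e}. \<Prod>j\<in>e'. y j)"
    proof (intro sum_mono prod_mono conjI)
      fix e' j assume "e' \<in> E - {e}" "j \<in> e'"
      hence "j < n" using edge(1) by auto
      thus "0 \<le> xs j" "xs j \<le> y j" using x0 yx by auto
    qed
    moreover have "Ff E xs = (\<Sum>e'\<in>E-{e}. \<Prod>j\<in>e'. xs j)"
      unfolding Ff_def using sum.remove[OF finE e, of "\<lambda>e. \<Prod>j\<in>e. xs j"] prod_x by simp
    ultimately have Fy: "Ff E xs + \<epsilon> ^ k * c \<le> Ff E y" using prod_e by simp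
    have "Nf n m y = (\<Sum>i<n. xs i ^ m + (if i \<in> T then \<epsilon> ^ m else 0))"
      unfolding Nf_def y_def using m2 by (intro sum.cong) (auto simp: T_def)
    also have "\<dots> = Nf n m xs + (\<Sum>i<n. if i \<in> T then \<epsilon> ^ m else 0)"
      unfolding Nf_def by (simp add: sum.distrib)
    also have "(\<Sum>i<n. if i \<in> T then \<epsilon> ^ m else 0) = real k * \<epsilon> ^ m"
    proof -
      have set: "{i\<in>{..<n}. i \<in> T} = T" using Tn by auto
      have "(\<Sum>i<n. if i \<in> T then \<epsilon> ^ m else 0) = (\<Sum>i\<in>{i\<in>{..<n}. i \<in> T}. \<epsilon> ^ m)"
        by (rule sum.inter_filter[symmetric]) simp
      hence "(\<Sum>i<n. if i \<in> T then \<epsilon> ^ m else 0) = (\<Sum>i\<in>T. \<epsilon> ^ m)" unfolding set .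
      thus ?thesis unfolding k_def by simp
    qed
    finally have Ny: "Nf n m y = 1 + real k * \<epsilon> ^ m" using xN by simp
    have "Ff E y \<le> Ff E xs * Nf n m y" by (rule ratio[OF xs ye y0])
    hence "Ff E y \<le> Ff E xs * (1 + real k * \<epsilon> ^ m)" unfolding Ny .
    moreover have "Ff E xs * (1 + real k * \<epsilon> ^ m) = Ff E xs + Ff E xs * real k * \<epsilon> ^ m"
      by (simp add: distrib_left)
    ultimately have "\<epsilon> ^ k * c \<le> Ff E xs * real k * \<epsilon> ^ m" using Fy by linarith
    also have "\<epsilon> ^ m = \<epsilon> ^ k * \<epsilon> ^ (m - k)"
    proof -
      have "k + (m - k) = m" using km by simp
      thus ?thesis using power_add[of \<epsilon> k "m - k"] by simp
    qed
    finally have "\<epsilon> ^ k * c \<le> \<epsilon> ^ k * (Ff E xs * real k * \<epsilon> ^ (m - k))" by (simp add: mult.assoc mult.left_commute)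
    hence c1: "c \<le> Ff E xs * real k * \<epsilon> ^ (m - k)" using epos by simp
    have "\<epsilon> ^ (m - k) \<le> \<epsilon>" using power_decreasing[of 1 "m - k" \<epsilon>] km e1 epos by simp
    hence "Ff E xs * real k * \<epsilon> ^ (m - k) \<le> Ff E xs * real k * \<epsilon>" using Fpos k1 by simp
    also have "\<dots> \<le> Ff E xs * real k * (c / (2 * real k * Ff E xs))" using Fpos k1 e2 by (intro mult_left_mono) auto
    also have "\<dots> = c / 2" using Fpos k1 by simp
    finally show False using c1 cpos by simp
  qed
  have "\<not> (\<forall>i<n. xs i = 0)"
  proof
    assume "\<forall>i<n. xs i = 0"
    hence "Nf n m xs = 0" unfolding Nf_def using m2 by simp
    thus False using xN by simp
  qed
  then obtain a where a0: "a < n" "xs a \<noteq> 0" by blast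
  have "0 \<le> xs a" using x0 a0(1) by blast
  hence a: "a < n" "xs a > 0" using a0 by linarith+
  show "\<forall>i<n. xs i > 0"
  proof (intro allI impI)
    fix i assume "i < n"
    have "(hg_adj E)\<^sup>*\<^sup>* a i" using conn[OF a(1) \<open>i < n\<close>] .
    thus "xs i > 0"
    proof (rule adj_propagate[where P = "\<lambda>x. xs x > 0"])
      show "xs a > 0" by (rule a(2))
      fix e x y assume "e \<in> E" "x \<in> e" "y \<in> e" "xs x > 0"
      thus "xs y > 0" by (rule clos)
    qed
  qed
qed

lemma Sv_scale: assumes "i < n" shows "Sv E i (restrict (\<lambda>j. c * y j) {..<n}) = c ^ (m - 1) * Sv E i (y::nat \<Rightarrow> real)"
proof -
  have "\<And>e. e \<in> {e\<in>E. i\<in>e} \<Longrightarrow> (\<Prod>j\<in>e-{i}. restrict (\<lambda>j. c * y j) {..<n} j) = c ^ (m - 1) * (\<Prod>j\<in>e-{i}. y j)"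
  proof -
    fix e assume e: "e \<in> {e\<in>E. i\<in>e}"
    have "(\<Prod>j\<in>e-{i}. restrict (\<lambda>j. c * y j) {..<n} j) = (\<Prod>j\<in>e-{i}. c * y j)"
      using edge(1) e by (intro prod.cong) auto
    also have "\<dots> = c ^ card (e - {i}) * (\<Prod>j\<in>e-{i}. y j)" by (simp add: prod.distrib)
    also have "card (e - {i}) = m - 1" using edge(2,3) e by auto
    finally show "(\<Prod>j\<in>e-{i}. restrict (\<lambda>j. c * y j) {..<n} j) = c ^ (m - 1) * (\<Prod>j\<in>e-{i}. y j)" .
  qed
  thus ?thesis unfolding Sv_def by (simp add: sum_distrib_left)
qed

lemma eig_at_max:
  assumes xs: "\<forall>y. y \<in> extensional {..<n} \<and> (\<forall>i<n. 0 \<le> y i \<and> y i \<le> 1) \<and> Nf n m y = 1 \<longrightarrow> Ff E y \<le> Ff E xs"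
    and xe: "xs \<in> extensional {..<n}" and xp: "\<forall>i<n. 0 < xs i" and xN: "Nf n m xs = 1"
    and i: "i < n"
  shows "Sv E i xs = real m * Ff E xs * xs i ^ (m - 1)"
proof -
  define S where "S = Sv E i xs"
  define F where "F = Ff E xs"
  define y where "y = (\<lambda>t. restrict (\<lambda>j. if j = i then xs j + t else xs j) {..<n})"
  have Fy: "Ff E (y t) = F + t * S" for t
  proof -
    have "\<And>e. e \<in> E \<Longrightarrow> (\<Prod>j\<in>e. y t j) = (\<Prod>j\<in>e. xs j) + (if i \<in> e then t * (\<Prod>j\<in>e-{i}. xs j) else 0)"
    proof -
      fix e assume e: "e \<in> E"
      show "(\<Prod>j\<in>e. y t j) = (\<Prod>j\<in>e. xs j) + (if i \<in> e then t * (\<Prod>j\<in>e-{i}. xs j) else 0)"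
      proof (cases "i \<in> e")
        case False
        thus ?thesis unfolding y_def using edge(1)[OF e] by (auto intro!: prod.cong)
      next
        case True
        have "(\<Prod>j\<in>e. y t j) = y t i * (\<Prod>j\<in>e-{i}. y t j)" using prod.remove[OF edge(3)[OF e] True, of "y t"] .
        also have "(\<Prod>j\<in>e-{i}. y t j) = (\<Prod>j\<in>e-{i}. xs j)" unfolding y_def using edge(1)[OF e] by (intro prod.cong) auto
        also have "y t i = xs i + t" unfolding y_def using i by simp
        also have "(\<Prod>j\<in>e. xs j) = xs i * (\<Prod>j\<in>e-{i}. xs j)" using prod.remove[OF edge(3)[OF e] True, of xs] .
        ultimately show ?thesis using True by (simp add: algebra_simps)
      qed
    qed
    hence "Ff E (y t) = (\<Sum>e\<in>E. (\<Prod>j\<in>e. xs j) + (if i \<in> e then t * (\<Prod>j\<in>e-{i}. xs j) else 0))"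
      unfolding Ff_def by (intro sum.cong) auto
    also have "\<dots> = F + (\<Sum>e\<in>E. if i \<in> e then t * (\<Prod>j\<in>e-{i}. xs j) else 0)"
      unfolding F_def Ff_def by (simp add: sum.distrib)
    also have "(\<Sum>e\<in>E. if i \<in> e then t * (\<Prod>j\<in>e-{i}. xs j) else 0) = (\<Sum>e\<in>{e\<in>E. i \<in> e}. t * (\<Prod>j\<in>e-{i}. xs j))"
      by (rule sum.inter_filter[OF finE, symmetric])
    also have "\<dots> = t * S" unfolding S_def Sv_def by (simp add: sum_distrib_left)
    finally show ?thesis .
  qed
  have Ny: "Nf n m (y t) = 1 - xs i ^ m + (xs i + t) ^ m" for t
  proof -
    have "Nf n m (y t) = (\<Sum>j<n. xs j ^ m + (if j = i then (xs i + t) ^ m - xs i ^ m else 0))"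
      unfolding Nf_def y_def by (intro sum.cong) auto
    also have "\<dots> = Nf n m xs + ((xs i + t) ^ m - xs i ^ m)"
      unfolding Nf_def using i by (simp add: sum.distrib)
    finally show ?thesis using xN by simp
  qed
  define g where "g = (\<lambda>t. F + t * S - F * (1 - xs i ^ m + (xs i + t) ^ m))"
  have "(g has_real_derivative (S - F * (real m * (xs i + 0) ^ (m - 1)))) (at 0)"
    unfolding g_def by (auto intro!: derivative_eq_intros)
  moreover have "0 < xs i" using xp i by auto
  moreover have "\<forall>t. \<bar>0 - t\<bar> < xs i \<longrightarrow> g t \<le> g 0"
  proof (intro allI impI)
    fix t assume t: "\<bar>0 - t\<bar> < xs i"
    have "\<forall>j<n. 0 \<le> y t j" unfolding y_def using xp t by (auto simp: less_imp_le)
    hence "Ff E (y t) \<le> Ff E xs * Nf n m (y t)" by (intro ratio[OF xs]) (auto simp: y_def)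
    hence "g t \<le> 0" unfolding g_def Fy Ny F_def by simp
    moreover have "g 0 = 0" unfolding g_def by simp
    ultimately show "g t \<le> g 0" by simp
  qed
  ultimately have "S - F * (real m * (xs i + 0) ^ (m - 1)) = 0" by (rule DERIV_local_max)
  thus ?thesis unfolding S_def F_def by simp
qed

lemma perron_exists: "\<exists>(v::nat \<Rightarrow> real) (r::real). v \<in> extensional {..<n} \<and> (\<forall>i<n. v i > 0) \<and> v 0 = 1 \<and> r > 0 \<and>
    (\<forall>i<n. Sv E i v = r * v i ^ (m - 1))"
proof -
  obtain xs where xs1: "xs \<in> extensional {..<n}" "\<forall>i<n. 0 \<le> xs i \<and> xs i \<le> 1" "Nf n m xs = 1"
    and xs: "\<forall>y. y \<in> extensional {..<n} \<and> (\<forall>i<n. 0 \<le> y i \<and> y i \<le> 1) \<and> Nf n m y = 1 \<longrightarrow> Ff E y \<le> Ff E xs"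
    using max_exists by blast
  have x0: "\<forall>i<n. 0 \<le> xs i" using xs1 by auto
  note pos = max_pos[OF xs xs1(1) x0 xs1(3)]
  define c where "c = 1 / xs 0"
  have cpos: "c > 0" unfolding c_def using pos(2) n_pos by auto
  define v where "v = restrict (\<lambda>j. c * xs j) {..<n}"
  define r where "r = real m * Ff E xs"
  show ?thesis
  proof (intro exI[of _ v] exI[of _ r] conjI allI impI)
    show "v \<in> extensional {..<n}" unfolding v_def by simp
    show "\<And>i. i < n \<Longrightarrow> v i > 0" unfolding v_def using pos(2) cpos by simp
    have "xs 0 > 0" using n_pos pos(2) by blast
    thus "v 0 = 1" unfolding v_def c_def using n_pos by simp
    show "r > 0" unfolding r_def using pos(1) m2 by simp
    fix i assume i: "i < n"
    have "Sv E i v = c ^ (m - 1) * Sv E i xs" unfolding v_def by (rule Sv_scale[OF i])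
    also have "Sv E i xs = r * xs i ^ (m - 1)" unfolding r_def
      by (rule eig_at_max[OF xs xs1(1) pos(2) xs1(3) i])
    also have "c ^ (m - 1) * (r * xs i ^ (m - 1)) = r * (c * xs i) ^ (m - 1)" by (simp add: power_mult_distrib)
    also have "c * xs i = v i" unfolding v_def using i by simp
    finally show "Sv E i v = r * v i ^ (m - 1)" .
  qed
qed

end


lemma tri_eq:
  fixes z :: "'b \<Rightarrow> complex"
  assumes fin: "finite A" and w: "w = (\<Sum>a\<in>A. z a)" and nw: "cmod w = (\<Sum>a\<in>A. cmod (z a))"
  shows "\<forall>a\<in>A. z a * cnj w = complex_of_real (cmod (z a) * cmod w)"
proof -
  have le: "\<And>a. Re (z a * cnj w) \<le> cmod (z a) * cmod w"
    by (metis complex_Re_le_cmod complex_mod_cnj norm_mult)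
  have "(\<Sum>a\<in>A. Re (z a * cnj w)) = Re (w * cnj w)" unfolding w by (simp add: sum_distrib_right)
  also have "\<dots> = cmod w ^ 2" by (simp add: complex_mult_cnj cmod_power2)
  also have "\<dots> = (\<Sum>a\<in>A. cmod (z a) * cmod w)" using nw by (simp add: power2_eq_square sum_distrib_right)
  finally have "(\<Sum>a\<in>A. cmod (z a) * cmod w - Re (z a * cnj w)) = 0" by (simp add: sum_subtractf)
  moreover have "(\<Sum>a\<in>A. cmod (z a) * cmod w - Re (z a * cnj w)) = 0 \<longleftrightarrow>
      (\<forall>a\<in>A. cmod (z a) * cmod w - Re (z a * cnj w) = 0)"
    by (rule sum_nonneg_eq_0_iff[OF fin]) (use le in simp)
  ultimately have eq0: "\<forall>a\<in>A. cmod (z a) * cmod w - Re (z a * cnj w) = 0" by simp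
  show ?thesis
  proof
    fix a assume a: "a \<in> A"
    define u where "u = z a * cnj w"
    have nu: "cmod u = cmod (z a) * cmod w" unfolding u_def by (simp add: norm_mult)
    have R: "Re u = cmod (z a) * cmod w" using eq0 a unfolding u_def by simp
    have "cmod u ^ 2 = Re u ^ 2 + Im u ^ 2" by (simp add: cmod_power2)
    hence "Im u = 0" using R nu by simp
    hence "u = complex_of_real (Re u)" by (simp add: complex_eq_iff)
    hence "u = complex_of_real (cmod (z a) * cmod w)" using R by simp
    thus "z a * cnj w = complex_of_real (cmod (z a) * cmod w)" unfolding u_def .
  qed
qed

lemma prod_eq_factors:
  fixes a b :: "'b \<Rightarrow> real"
  assumes fin: "finite A" and ab: "\<forall>j\<in>A. 0 \<le> a j \<and> a j \<le> b j \<and> 0 < b j" and eq: "(\<Prod>j\<in>A. a j) = (\<Prod>j\<in>A. b j)"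
  shows "\<forall>j\<in>A. a j = b j"
proof (rule ccontr)
  assume "\<not> ?thesis"
  then obtain j where j: "j \<in> A" "a j \<noteq> b j" by auto
  hence lt: "a j < b j" using ab by force
  have "(\<Prod>j\<in>A. a j) = a j * (\<Prod>i\<in>A-{j}. a i)" using prod.remove[OF fin j(1), of a] .
  also have "\<dots> \<le> a j * (\<Prod>i\<in>A-{j}. b i)"
    using ab j by (intro mult_left_mono prod_mono) auto
  also have "\<dots> < b j * (\<Prod>i\<in>A-{j}. b i)"
    using lt ab by (intro mult_strict_right_mono prod_pos) auto
  also have "\<dots> = (\<Prod>j\<in>A. b j)" using prod.remove[OF fin j(1), of b] by simp
  finally show False using eq by simp
qed

locale hgcp = hgc +
  fixes v :: "nat \<Rightarrow> real" and r :: real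
  assumes vext: "v \<in> extensional {..<n}" and vpos: "\<forall>i<n. v i > 0" and v0: "v 0 = 1"
    and rpos: "r > 0" and veig: "\<forall>i<n. Sv E i v = r * v i ^ (m - 1)"
begin

abbreviation "A \<equiv> adj_tensor m E"
definition dv :: "(nat \<Rightarrow> complex) \<Rightarrow> nat \<Rightarrow> complex" where
  "dv d = restrict (\<lambda>i. d i * complex_of_real (v i)) {..<n}"

lemma Sv_cong: "(\<And>j. j < n \<Longrightarrow> a j = b j) \<Longrightarrow> Sv E i a = Sv E i b"
  unfolding Sv_def using edge(1) by (intro sum.cong refl prod.cong) auto

lemma Sv_of_real: "Sv E i (\<lambda>j. complex_of_real (x j)) = complex_of_real (Sv E i x)"
  unfolding Sv_def by simp

lemma Sv_mono: assumes "\<And>j. j < n \<Longrightarrow> 0 \<le> a j \<and> a j \<le> b j" shows "Sv E i a \<le> Sv E i (b :: nat \<Rightarrow> real)"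
  unfolding Sv_def
proof (intro sum_mono prod_mono)
  fix e j assume "e \<in> {e\<in>E. i\<in>e}" "j \<in> e - {i}"
  hence "j < n" using edge(1) by auto
  thus "0 \<le> a j \<and> a j \<le> b j" using assms by auto
qed

lemma Sv_norm: "cmod (Sv E i y) \<le> Sv E i (\<lambda>j. cmod (y j))"
  unfolding Sv_def by (rule order_trans[OF norm_sum]) (simp add: prod_norm)

lemma Sv_tv: "i < n \<Longrightarrow> Sv E i (\<lambda>j. t * v j) = r * (t * v i) ^ (m - 1)"
proof -
  assume i: "i < n"
  have "Sv E i (\<lambda>j. t * v j) = Sv E i (restrict (\<lambda>j. t * v j) {..<n})" by (rule Sv_cong) simp
  also have "\<dots> = t ^ (m - 1) * Sv E i v" by (rule Sv_scale[OF i])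
  also have "\<dots> = r * (t * v i) ^ (m - 1)" using veig i by (simp add: power_mult_distrib)
  finally show ?thesis .
qed

lemma eigenpair_iff: "eigenpair m n A lam y \<longleftrightarrow> (\<exists>i<n. y i \<noteq> 0) \<and> (\<forall>i<n. Sv E i y = lam * y i ^ (m - 1))"
  unfolding eigenpair_def using TA[OF H] by simp

lemma max_ratio:
  assumes nz: "\<exists>i<n. y i \<noteq> 0"
  obtains t i0 where "t > 0" "i0 < n" "cmod (y i0) = t * v i0" "\<forall>j<n. cmod (y j) \<le> t * v j"
proof -
  define q where "q = (\<lambda>j. cmod (y j) / v j)"
  define t where "t = Max (q ` {..<n})"
  have fin: "finite (q ` {..<n})" by simp
  have ne: "q ` {..<n} \<noteq> {}" using n_pos by auto
  obtain i0 where i0: "i0 < n" "q i0 = t" using Max_in[OF fin ne] unfolding t_def by auto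
  have le: "\<forall>j<n. q j \<le> t" unfolding t_def using fin by auto
  obtain j where j: "j < n" "y j \<noteq> 0" using nz by auto
  have "q j > 0" unfolding q_def using j vpos by auto
  hence tpos: "t > 0" using le j by force
  have "cmod (y i0) = t * v i0" using i0 vpos unfolding q_def by (auto simp: field_simps)
  moreover have "\<forall>j<n. cmod (y j) \<le> t * v j"
  proof (intro allI impI)
    fix j assume "j < n"
    hence "cmod (y j) / v j \<le> t" "v j > 0" using le vpos unfolding q_def by auto
    thus "cmod (y j) \<le> t * v j" by (simp add: divide_le_eq mult.commute)
  qed
  ultimately show ?thesis using that tpos i0 by blast
qed

lemma eig_bound: assumes "eigenpair m n A lam y" shows "cmod lam \<le> r"
proof -
  have nz: "\<exists>i<n. y i \<noteq> 0" and eq: "\<forall>i<n. Sv E i y = lam * y i ^ (m - 1)"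
    using assms unfolding eigenpair_iff by auto
  obtain t i0 where t: "t > 0" "i0 < n" "cmod (y i0) = t * v i0" "\<forall>j<n. cmod (y j) \<le> t * v j"
    using max_ratio[OF nz] by blast
  have "cmod lam * (t * v i0) ^ (m - 1) = cmod (Sv E i0 y)"
    using eq t(2,3) by (simp add: norm_mult norm_power)
  also have "\<dots> \<le> Sv E i0 (\<lambda>j. cmod (y j))" by (rule Sv_norm)
  also have "\<dots> \<le> Sv E i0 (\<lambda>j. t * v j)" by (rule Sv_mono) (use t(4) in auto)
  also have "\<dots> = r * (t * v i0) ^ (m - 1)" by (rule Sv_tv[OF t(2)])
  finally have "cmod lam * (t * v i0) ^ (m - 1) \<le> r * (t * v i0) ^ (m - 1)" .
  moreover have "(t * v i0) ^ (m - 1) > 0" using t vpos by simp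
  ultimately show ?thesis by simp
qed

definition vc where "vc = restrict (\<lambda>i. complex_of_real (v i)) {..<n}"

lemma vc_eig: "eigenpair m n A (complex_of_real r) vc"
  unfolding eigenpair_iff
proof (intro conjI allI impI)
  show "\<exists>i<n. vc i \<noteq> 0" using n_pos v0 unfolding vc_def by (intro exI[of _ 0]) auto
  fix i assume i: "i < n"
  have "Sv E i vc = Sv E i (\<lambda>j. complex_of_real (v j))" by (rule Sv_cong) (simp add: vc_def)
  also have "\<dots> = complex_of_real (r * v i ^ (m - 1))" using Sv_of_real veig i by simp
  finally show "Sv E i vc = complex_of_real r * vc i ^ (m - 1)" using i by (simp add: vc_def)
qed

lemma rho_eq: "tensor_spectral_radius m n A = r"
  unfolding tensor_spectral_radius_def
proof (rule cSup_eq_maximum)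
  show "r \<in> {cmod lam |lam. \<exists>x. eigenpair m n A lam x}"
    using vc_eig rpos by (intro CollectI exI[of _ "complex_of_real r"]) auto
  fix x assume "x \<in> {cmod lam |lam. \<exists>x. eigenpair m n A lam x}"
  thus "x \<le> r" using eig_bound by auto
qed

lemma dv_ext: "dv d \<in> extensional {..<n}" unfolding dv_def by simp

lemma Sv_dv: assumes d: "d \<in> Dset n m E" and i: "i < n"
  shows "Sv E i (dv d) = complex_of_real r * (dv d i) ^ (m - 1)"
proof -
  have "Sv E i (dv d) = Sv E i (\<lambda>j. d j * complex_of_real (v j))" by (rule Sv_cong) (simp add: dv_def)
  also have "\<dots> = (\<Sum>e\<in>{e\<in>E. i\<in>e}. (\<Prod>j\<in>e-{i}. d j) * (\<Prod>j\<in>e-{i}. complex_of_real (v j)))"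
    unfolding Sv_def by (simp add: prod.distrib)
  also have "\<dots> = (\<Sum>e\<in>{e\<in>E. i\<in>e}. d i ^ (m - 1) * (\<Prod>j\<in>e-{i}. complex_of_real (v j)))"
    using d unfolding Dset_def stab_def by (intro sum.cong refl) auto
  also have "\<dots> = d i ^ (m - 1) * Sv E i (\<lambda>j. complex_of_real (v j))"
    unfolding Sv_def by (simp add: sum_distrib_left)
  also have "\<dots> = d i ^ (m - 1) * complex_of_real (r * v i ^ (m - 1))" using Sv_of_real veig i by simp
  also have "\<dots> = complex_of_real r * (dv d i) ^ (m - 1)" using i by (simp add: dv_def power_mult_distrib)
  finally show ?thesis .
qed

lemma dv_in: assumes d: "d \<in> Dset n m E" shows "dv d \<in> rho_eigvecs m n A"
  unfolding rho_eigvecs_def rho_eq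
proof (intro CollectI conjI)
  show "dv d \<in> extensional {..<n}" by (rule dv_ext)
  have d0: "d 0 = 1" using d unfolding Dset_def by auto
  show "dv d 0 = 1" using d0 v0 n_pos by (simp add: dv_def)
  show "eigenpair m n A (complex_of_real r) (dv d)" unfolding eigenpair_iff
    using Sv_dv[OF d] \<open>dv d 0 = 1\<close> n_pos by auto
qed

lemma in_dv: assumes y: "y \<in> rho_eigvecs m n A" shows "\<exists>d\<in>Dset n m E. y = dv d"
proof -
  have yext: "y \<in> extensional {..<n}" and y0: "y 0 = 1" and eig: "eigenpair m n A (complex_of_real r) y"
    using y unfolding rho_eigvecs_def rho_eq by auto
  have nz: "\<exists>i<n. y i \<noteq> 0" and eq: "\<forall>i<n. Sv E i y = complex_of_real r * y i ^ (m - 1)"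
    using eig unfolding eigenpair_iff by auto
  obtain t i0 where t: "t > 0" "i0 < n" "cmod (y i0) = t * v i0" "\<forall>j<n. cmod (y j) \<le> t * v j"
    using max_ratio[OF nz] by blast
  have clos: "cmod (y z) = t * v z" if e: "e \<in> E" and x: "x \<in> e" and z: "z \<in> e" and Px: "cmod (y x) = t * v x" for e x z
  proof -
    have xn: "x < n" using x edge(1)[OF e] by auto
    have "r * (t * v x) ^ (m - 1) = cmod (Sv E x y)" using eq xn Px rpos by (simp add: norm_mult norm_power)
    also have "\<dots> \<le> Sv E x (\<lambda>j. cmod (y j))" by (rule Sv_norm)
    finally have le1: "r * (t * v x) ^ (m - 1) \<le> Sv E x (\<lambda>j. cmod (y j))" .
    have le2: "Sv E x (\<lambda>j. cmod (y j)) \<le> Sv E x (\<lambda>j. t * v j)" by (rule Sv_mono) (use t(4) in auto)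
    have "Sv E x (\<lambda>j. t * v j) = r * (t * v x) ^ (m - 1)" by (rule Sv_tv[OF xn])
    with le1 le2 have "Sv E x (\<lambda>j. t * v j) - Sv E x (\<lambda>j. cmod (y j)) = 0" by simp
    hence "(\<Sum>e'\<in>{e\<in>E. x\<in>e}. (\<Prod>j\<in>e'-{x}. t * v j) - (\<Prod>j\<in>e'-{x}. cmod (y j))) = 0"
      unfolding Sv_def by (simp add: sum_subtractf)
    moreover have "\<forall>e'\<in>{e\<in>E. x\<in>e}. 0 \<le> (\<Prod>j\<in>e'-{x}. t * v j) - (\<Prod>j\<in>e'-{x}. cmod (y j))"
    proof
      fix e' assume e': "e' \<in> {e\<in>E. x\<in>e}"
      have "(\<Prod>j\<in>e'-{x}. cmod (y j)) \<le> (\<Prod>j\<in>e'-{x}. t * v j)"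
      proof (rule prod_mono)
        fix j assume "j \<in> e' - {x}"
        hence "j < n" using e' edge(1) by auto
        thus "0 \<le> cmod (y j) \<and> cmod (y j) \<le> t * v j" using t(4) by auto
      qed
      thus "0 \<le> (\<Prod>j\<in>e'-{x}. t * v j) - (\<Prod>j\<in>e'-{x}. cmod (y j))" by simp
    qed
    ultimately have "\<forall>e'\<in>{e\<in>E. x\<in>e}. (\<Prod>j\<in>e'-{x}. t * v j) - (\<Prod>j\<in>e'-{x}. cmod (y j)) = 0"
      using sum_nonneg_eq_0_iff[of "{e\<in>E. x\<in>e}" "\<lambda>e'. (\<Prod>j\<in>e'-{x}. t * v j) - (\<Prod>j\<in>e'-{x}. cmod (y j))"] finE
      by simp
    hence peq: "(\<Prod>j\<in>e-{x}. cmod (y j)) = (\<Prod>j\<in>e-{x}. t * v j)" using e x by auto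
    show ?thesis
    proof (cases "z = x")
      case True thus ?thesis using Px by simp
    next
      case False
      have "\<forall>j\<in>e-{x}. cmod (y j) = t * v j"
      proof (rule prod_eq_factors[OF _ _ peq])
        show "finite (e - {x})" using edge(3)[OF e] by simp
        show "\<forall>j\<in>e - {x}. 0 \<le> cmod (y j) \<and> cmod (y j) \<le> t * v j \<and> 0 < t * v j"
          using edge(1)[OF e] t(1,4) vpos by auto
      qed
      thus ?thesis using False z by auto
    qed
  qed
  have abs_all: "\<forall>i<n. cmod (y i) = t * v i"
  proof (intro allI impI)
    fix i assume "i < n"
    have "(hg_adj E)\<^sup>*\<^sup>* i0 i" using conn[OF t(2) \<open>i < n\<close>] .
    thus "cmod (y i) = t * v i"
    proof (rule adj_propagate[where P = "\<lambda>x. cmod (y x) = t * v x"])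
      show "cmod (y i0) = t * v i0" by (rule t(3))
      fix e x z assume "e \<in> E" "x \<in> e" "z \<in> e" "cmod (y x) = t * v x"
      thus "cmod (y z) = t * v z" by (rule clos)
    qed
  qed
  have "t = 1" using abs_all[rule_format, OF n_pos] y0 v0 by simp
  hence absy: "\<forall>i<n. cmod (y i) = v i" using abs_all by simp
  define d where "d = restrict (\<lambda>i. y i / complex_of_real (v i)) {..<n}"
  have ydv: "y = dv d"
  proof (rule extensionalityI[OF yext dv_ext])
    fix i assume "i \<in> {..<n}"
    thus "y i = dv d i" using vpos unfolding dv_def d_def by auto
  qed
  have dnorm: "\<forall>i<n. cmod (d i) = 1"
    using absy vpos unfolding d_def by (auto simp: norm_divide)
  have "d \<in> Dset n m E" unfolding Dset_def
  proof (intro CollectI conjI allI impI)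
    show "d \<in> extensional {..<n}" unfolding d_def by simp
    show "d 0 = 1" unfolding d_def using y0 v0 n_pos by simp
    show "\<And>i. i < n \<Longrightarrow> d i \<noteq> 0" using dnorm by (metis norm_zero zero_neq_one)
    show "stab E m d" unfolding stab_def
    proof (intro ballI)
      fix e i assume e: "e \<in> E" and ie: "i \<in> e"
      have i: "i < n" using e ie edge(1) by auto
      define Ei where "Ei = {e\<in>E. i\<in>e}"
      define z where "z = (\<lambda>e'. \<Prod>j\<in>e'-{i}. y j)"
      define w where "w = complex_of_real r * y i ^ (m - 1)"
      define R where "R = r * v i ^ (m - 1)"
      have Rpos: "R > 0" unfolding R_def using rpos vpos i by simp
      have wsum: "w = (\<Sum>e'\<in>Ei. z e')" unfolding w_def z_def Ei_def using eq i by (simp add: Sv_def)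
      have cw: "cmod w = R" unfolding w_def R_def using absy i rpos by (simp add: norm_mult norm_power)
      have cz: "cmod (z e') = (\<Prod>j\<in>e'-{i}. v j)" if e': "e' \<in> Ei" for e'
      proof -
        have "cmod (z e') = (\<Prod>j\<in>e'-{i}. cmod (y j))" unfolding z_def by (simp add: prod_norm)
        also have "\<dots> = (\<Prod>j\<in>e'-{i}. v j)"
          using absy edge(1) e' unfolding Ei_def by (intro prod.cong) auto
        finally show ?thesis .
      qed
      have "(\<Sum>e'\<in>Ei. cmod (z e')) = (\<Sum>e'\<in>Ei. \<Prod>j\<in>e'-{i}. v j)" using cz by (rule sum.cong[OF refl])
      also have "\<dots> = Sv E i v" unfolding Sv_def Ei_def ..
      also have "\<dots> = R" unfolding R_def using veig i by simp
      finally have "cmod w = (\<Sum>e'\<in>Ei. cmod (z e'))" using cw by simp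
      from tri_eq[OF _ wsum this] finE have tri: "\<forall>e'\<in>Ei. z e' * cnj w = complex_of_real (cmod (z e') * cmod w)"
        unfolding Ei_def by simp
      have eEi: "e \<in> Ei" unfolding Ei_def using e ie by simp
      define P where "P = (\<Prod>j\<in>e-{i}. v j)"
      have Ppos: "P > 0" unfolding P_def using edge(1)[OF e] vpos by (intro prod_pos) auto
      have ze: "z e = (\<Prod>j\<in>e-{i}. d j) * complex_of_real P"
      proof -
        have "z e = (\<Prod>j\<in>e-{i}. d j * complex_of_real (v j))"
          unfolding z_def using ydv edge(1)[OF e] by (intro prod.cong) (auto simp: dv_def)
        thus ?thesis unfolding P_def by (simp add: prod.distrib)
      qed
      have wd: "w = complex_of_real R * d i ^ (m - 1)"
        unfolding w_def R_def using ydv i by (simp add: dv_def power_mult_distrib)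
      have "z e * cnj w = complex_of_real (P * R)" using tri eEi cz[OF eEi] cw unfolding P_def by simp
      hence "(\<Prod>j\<in>e-{i}. d j) * cnj (d i) ^ (m - 1) * complex_of_real (P * R) = complex_of_real (P * R)"
        unfolding ze wd by (simp add: ac_simps)
      hence key: "(\<Prod>j\<in>e-{i}. d j) * cnj (d i) ^ (m - 1) = 1" using Ppos Rpos by simp
      have "d i * cnj (d i) = 1" using dnorm i complex_norm_square[of "d i"] by simp
      hence "(d i * cnj (d i)) ^ (m - 1) = 1" by simp
      hence "d i ^ (m - 1) = d i ^ (m - 1) * ((\<Prod>j\<in>e-{i}. d j) * cnj (d i) ^ (m - 1))" using key by simp
      also have "\<dots> = (\<Prod>j\<in>e-{i}. d j) * (d i * cnj (d i)) ^ (m - 1)" by (simp add: power_mult_distrib ac_simps)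
      also have "\<dots> = (\<Prod>j\<in>e-{i}. d j)" using \<open>d i * cnj (d i) = 1\<close> by simp
      finally show "d i ^ (m - 1) = (\<Prod>j\<in>e-{i}. d j)" .
    qed
  qed
  thus ?thesis using ydv by blast
qed

lemma rho_char: "rho_eigvecs m n A = dv ` Dset n m E"
  using dv_in in_dv by blast

lemma one_D: "one1 {..<n} \<in> Dset n m E"
  unfolding Dset_def stab_def one1_def
proof (intro CollectI conjI allI impI ballI)
  show "(\<lambda>i\<in>{..<n}. 1::complex) 0 = 1" using n_pos by simp
  fix e i assume e: "e \<in> E" and "i \<in> e"
  hence "i < n" using edge(1) by auto
  moreover have "(\<Prod>j\<in>e-{i}. (\<lambda>i\<in>{..<n}. 1::complex) j) = 1"
    using edge(1)[OF e] by (intro prod.neutral) auto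
  ultimately show "(\<lambda>i\<in>{..<n}. 1::complex) i ^ (m - 1) = (\<Prod>j\<in>e-{i}. (\<lambda>i\<in>{..<n}. 1::complex) j)" by simp
qed auto

lemma pmul_D: assumes d: "d \<in> Dset n m E" and d': "d' \<in> Dset n m E" shows "pmul {..<n} d d' \<in> Dset n m E"
  unfolding Dset_def stab_def
proof (intro CollectI conjI allI impI ballI)
  show "pmul {..<n} d d' \<in> extensional {..<n}" unfolding pmul_def by simp
  show "pmul {..<n} d d' 0 = 1" using d d' n_pos unfolding pmul_def Dset_def by simp
  fix i assume "i < n"
  thus "pmul {..<n} d d' i \<noteq> 0" using d d' unfolding pmul_def Dset_def by simp
next
  fix e i assume e: "e \<in> E" and ie: "i \<in> e"
  have i: "i < n" using e ie edge(1) by auto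
  have "pmul {..<n} d d' i ^ (m - 1) = d i ^ (m - 1) * d' i ^ (m - 1)"
    using i unfolding pmul_def by (simp add: power_mult_distrib)
  also have "\<dots> = (\<Prod>j\<in>e-{i}. d j) * (\<Prod>j\<in>e-{i}. d' j)"
    using d d' e ie unfolding Dset_def stab_def by auto
  also have "\<dots> = (\<Prod>j\<in>e-{i}. pmul {..<n} d d' j)"
    unfolding prod.distrib[symmetric] pmul_def using edge(1)[OF e] by (intro prod.cong) auto
  finally show "pmul {..<n} d d' i ^ (m - 1) = (\<Prod>j\<in>e-{i}. pmul {..<n} d d' j)" .
qed

lemma dv_one: "dv (one1 {..<n}) = vc" unfolding dv_def vc_def one1_def by auto

lemma perron_eq: "perron_vec m n A = vc"
  unfolding perron_vec_def
proof (rule the_equality)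
  show "vc \<in> rho_eigvecs m n A \<and> (\<forall>i<n. Im (vc i) = 0 \<and> 0 < Re (vc i))"
    using dv_in[OF one_D] dv_one vpos unfolding vc_def by auto
  fix w assume w: "w \<in> rho_eigvecs m n A \<and> (\<forall>i<n. Im (w i) = 0 \<and> 0 < Re (w i))"
  then obtain d where d: "d \<in> Dset n m E" "w = dv d" using in_dv by blast
  have "\<forall>i<n. d i = 1"
  proof (intro allI impI)
    fix i assume i: "i < n"
    have wi: "w i = d i * complex_of_real (v i)" using d(2) i unfolding dv_def by simp
    define x where "x = Re (w i) / v i"
    have xpos: "x > 0" unfolding x_def using w vpos i by auto
    define a where "a = Re (w i)"
    have wa: "w i = complex_of_real a" unfolding a_def using w i by (simp add: complex_eq_iff)
    have vne: "v i \<noteq> 0" using vpos i by (metis less_irrefl)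
    have "d i * complex_of_real (v i) = complex_of_real a" using wi wa by simp
    hence "d i = complex_of_real a / complex_of_real (v i)" using vne by (simp add: eq_divide_eq)
    hence "d i = complex_of_real x" unfolding x_def a_def[symmetric] by simp
    moreover have "cmod (d i) = 1" by (rule D_norm[OF d(1) i])
    ultimately have "x = 1" using xpos by simp
    thus "d i = 1" using \<open>d i = complex_of_real x\<close> by simp
  qed
  hence "d = one1 {..<n}"
    using d(1) unfolding Dset_def one1_def by (intro extensionalityI[of _ "{..<n}"]) auto
  thus "w = vc" using d(2) dv_one by simp
qed

lemma sgn_dv: assumes d: "d \<in> Dset n m E" and i: "i < n" shows "sgn (dv d i) = d i"
proof -
  have dv: "dv d i = d i * complex_of_real (v i)" using i unfolding dv_def by simp
  have vi: "v i > 0" using vpos i by blast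
  have "cmod (dv d i) = v i" using dv D_norm[OF d i] vi by (simp add: norm_mult)
  thus ?thesis using vi dv by (simp add: sgn_div_norm scaleR_conv_of_real)
qed

lemma op_dv: assumes d: "d \<in> Dset n m E" and d': "d' \<in> Dset n m E"
  shows "eig_op m n A (dv d) (dv d') = dv (pmul {..<n} d d')"
  unfolding eig_op_def perron_eq
proof (rule extensionalityI[of _ "{..<n}"])
  show "dv (pmul {..<n} d d') \<in> extensional {..<n}" by (rule dv_ext)
  fix i assume "i \<in> {..<n}"
  thus "restrict (\<lambda>i. sgn (dv d i) * sgn (dv d' i) * vc i) {..<n} i = dv (pmul {..<n} d d') i"
    using sgn_dv[OF d] sgn_dv[OF d'] unfolding dv_def vc_def pmul_def by simp
qed simp

definition psi :: "(nat \<Rightarrow> complex) \<Rightarrow> nat \<Rightarrow> complex" where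
  "psi y = restrict (\<lambda>i. sgn (y i)) {..<n}"

lemma psi_dv: assumes d: "d \<in> Dset n m E" shows "psi (dv d) = d"
proof (rule extensionalityI[of _ "{..<n}"])
  show "d \<in> extensional {..<n}" using d unfolding Dset_def by auto
  fix i assume "i \<in> {..<n}"
  thus "psi (dv d) i = d i" using sgn_dv[OF d] unfolding psi_def by simp
qed (simp add: psi_def)

lemma goodD: "goodset m {..<n} (Dset n m E)"
  unfolding goodset_def using one_D pmul_D D_root unfolding Dset_def by auto

theorem main: "stabilizing_index m n A \<le> m ^ (n - matching_number E - 2) \<and>
         stabilizing_dimension m n A \<le> (n - matching_number E - 2) * cl m"
proof -
  obtain W where W: "W \<subseteq> {..<n}" "card W = n - matching_number E - 2"
    and detW: "\<forall>d\<in>Dset n m E. \<forall>d'\<in>Dset n m E. (\<forall>i\<in>W. d i = d' i) \<longrightarrow> d = d'"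
    using pivots by blast
  define k where "k = card W"
  have m1: "m \<ge> 1" using m2 by simp
  define R where "R = (\<lambda>d. restrict d W) ` Dset n m E"
  define C where "C = PiE W (\<lambda>_. {z::complex. z ^ m = 1})"
  have injR: "inj_on (\<lambda>d. restrict d W) (Dset n m E)"
  proof (rule inj_onI)
    fix d d' assume "d \<in> Dset n m E" "d' \<in> Dset n m E" "restrict d W = restrict d' W"
    moreover have "\<forall>i\<in>W. d i = d' i"
    proof
      fix i assume i: "i \<in> W"
      have "restrict d W i = restrict d' W i" using \<open>restrict d W = restrict d' W\<close> by simp
      thus "d i = d' i" using i by simp
    qed
    ultimately show "d = d'" using detW by blast
  qed
  have finW: "finite W" using W(1) by (rule finite_subset) simp
  have finC: "finite C" unfolding C_def using finW finite_roots_unity[OF m1] by (intro finite_PiE) auto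
  have cardC: "card C = m ^ k" unfolding C_def k_def using finW card_complex_roots_unity[OF m1]
    by (simp add: card_PiE)
  have RC: "R \<subseteq> C" unfolding R_def C_def using D_root W(1) by (auto simp: PiE_def)
  have gC: "goodset m W C" unfolding goodset_def C_def one1_def pmul_def
    by (auto simp: PiE_def Pi_def power_mult_distrib)
  have gR: "goodset m W R" unfolding goodset_def
  proof (intro conjI)
    show "R \<subseteq> extensional W" unfolding R_def by auto
    show "\<forall>x\<in>R. \<forall>i\<in>W. x i ^ m = 1" unfolding R_def using D_root W(1) by auto
    have "one1 W = restrict (one1 {..<n}) W" unfolding one1_def using W(1) by (auto simp: fun_eq_iff)
    thus "one1 W \<in> R" unfolding R_def using one_D by auto
    show "\<forall>a\<in>R. \<forall>b\<in>R. pmul W a b \<in> R"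
    proof (intro ballI)
      fix a b assume "a \<in> R" "b \<in> R"
      then obtain d d' where dd: "d \<in> Dset n m E" "d' \<in> Dset n m E" "a = restrict d W" "b = restrict d' W"
        unfolding R_def by auto
      have "pmul W a b = restrict (pmul {..<n} d d') W" unfolding dd pmul_def using W(1) by (auto simp: fun_eq_iff)
      thus "pmul W a b \<in> R" unfolding R_def using pmul_D[OF dd(1,2)] by auto
    qed
  qed
  have cardR: "card R = card (Dset n m E)" unfolding R_def by (rule card_image[OF injR])
  have finR: "finite R" using RC finC by (rule finite_subset)
  have finD: "finite (Dset n m E)" using finR injR unfolding R_def by (simp add: finite_image_iff)
  have dvd: "card (Dset n m E) dvd m ^ k" using good_dvd[OF gR gC RC finC m1] cardR cardC by simp
  have s: "stabilizing_index m n A \<le> m ^ k"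
    using SI[OF H] cardR card_mono[OF finC RC] cardC by simp
  define Y where "Y = rho_eigvecs m n A"
  have Y: "Y = dv ` Dset n m E" unfolding Y_def by (rule rho_char)
  have injdv: "inj_on dv (Dset n m E)"
  proof (rule inj_onI)
    fix d d' assume "d \<in> Dset n m E" "d' \<in> Dset n m E" "dv d = dv d'"
    thus "d = d'" using psi_dv by metis
  qed
  have injpsi: "inj_on psi Y" unfolding Y
  proof (rule inj_onI)
    fix x y assume "x \<in> dv ` Dset n m E" "y \<in> dv ` Dset n m E" "psi x = psi y"
    thus "x = y" using psi_dv by auto
  qed
  have psiY: "psi ` Y = Dset n m E" unfolding Y image_image using psi_dv by simp
  have "zm_composition_length m Y (eig_op m n A) vc \<le> size (prime_factorization (card Y))"
  proof (rule comp_len_bound[where psi = psi and I = "{..<n}"])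
    show "vc \<in> Y" unfolding Y using dv_one one_D by force
    show "\<forall>x\<in>Y. \<forall>y\<in>Y. eig_op m n A x y \<in> Y" unfolding Y using op_dv pmul_D by auto
    have "pmul {..<n} (one1 {..<n}) (one1 {..<n}) = one1 {..<n}" unfolding pmul_def one1_def by (auto simp: fun_eq_iff)
    thus "eig_op m n A vc vc = vc" using op_dv[OF one_D one_D] dv_one by simp
    show "inj_on psi Y" by (rule injpsi)
    show "psi vc = one1 {..<n}" using psi_dv[OF one_D] dv_one by simp
    show "\<forall>x\<in>Y. \<forall>y\<in>Y. psi (eig_op m n A x y) = pmul {..<n} (psi x) (psi y)"
      unfolding Y using op_dv psi_dv pmul_D by auto
    show "goodset m {..<n} (psi ` Y)" unfolding psiY by (rule goodD)
    show "finite Y" unfolding Y using finD by simp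
    show "m \<ge> 1" by (rule m1)
  qed
  moreover have "card Y = card (Dset n m E)" unfolding Y by (rule card_image[OF injdv])
  moreover have "size (prime_factorization (card (Dset n m E))) \<le> size (prime_factorization (m ^ k))"
    using dvd m2 by (intro omega_dvd) auto
  moreover have "size (prime_factorization (m ^ k)) = k * cl m"
    unfolding cl_def using m2 by (intro omega_pow) auto
  ultimately have "stabilizing_dimension m n A \<le> k * cl m"
    unfolding stabilizing_dimension_def perron_eq Y_def by simp
  thus ?thesis using s W(2) unfolding k_def by simp
qed

end


theorem corollary4p14:
  fixes n m :: nat and E :: "nat set set"
  assumes "hg_uniform n m E"
    and "hg_connected n E"
    and "card E > 1"
  shows "stabilizing_index m n (adj_tensor m E) \<le> m ^ (n - matching_number E - 2) \<and>
         stabilizing_dimension m n (adj_tensor m E) \<le> (n - matching_number E - 2) * cl m"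
proof -
  interpret hgc n m E by (rule hgc.intro[OF assms])
  obtain v :: "nat \<Rightarrow> real" and r :: real where vr: "v \<in> extensional {..<n}" "\<forall>i<n. v i > 0" "v 0 = 1" "r > 0"
    "\<forall>i<n. Sv E i v = r * v i ^ (m - 1)"
    using perron_exists by blast
  interpret hgcp n m E v r by (intro hgcp.intro hgc.intro hgcp_axioms.intro assms vr)
  show ?thesis by (rule main)
qed

end
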